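(* Suppose that for each $h$ there is a linear projector $P_h:H^1(\Omega)\to\mathbb V_h$ with $P_h(H^1_0(\Omega))=\mathbb W_h$ and $\|P_hv\|_{H^1(\Omega)}\le B\|v\|_{H^1(\Omega)}$ for all $v\in H^1(\Omega)$, with $B$ independent of $h$. Then for all $h$ and all $g_h\in\mathbb T_h$, $$\|E_hg_h\|_{H^1(\Omega)}\le (1+2C_P)BC_E\|g_h\|_{H^{1/2}(\Gamma)} .$$
   Context: $\Omega\subset\mathbb{R}^d$ ($d=2$ or $3$) is a polygonal/polyhedral domain, $\Gamma=\partial\Omega$. For $g\in H^{1/2}(\Gamma)$, $Eg:=\operatorname{argmin}\{\|\nabla v\|_{L^2(\Omega)}: v\in H^1(\Omega),\ v|_\Gamma=g\}$ (the harmonic extension), and $C_E$ is a constant with $\|Eg\|_{H^1(\Omega)}\le C_E\|g\|_{H^{1/2}(\Gamma)}$. $C_P$ is a Poincaré constant: $\|v\|_{H^1(\Omega)}\le C_P\|\nabla v\|_{L^2(\Omega)}$ for $v\in H^1_0(\Omega)$. $\{\mathbb V_h\}_{h>0}$ are $H^1$-conforming Lagrange finite element spaces on simplicial meshes $\mathcal T_h$ of $\Omega$, $\mathbb T_h:=\{v_h|_\Gamma: v_h\in\mathbb V_h\}$, $\mathbb W_h:=\{v_h\in\mathbb V_h: v_h|_\Gamma=0\}$, and for $g_h\in\mathbb T_h$, $E_hg_h:=\operatorname{argmin}\{\|\nabla v_h\|_{L^2(\Omega)}: v_h\in\mathbb V_h,\ v_h|_\Gamma=g_h\}$. *)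

theory Defs
  imports "HOL-Analysis.Analysis"
begin

definition polyhedral_domain :: "'a::euclidean_space set \<Rightarrow> bool" where
  "polyhedral_domain \<Omega> \<longleftrightarrow> open \<Omega> \<and> bounded \<Omega> \<and> connected \<Omega> \<and> \<Omega> \<noteq> {} \<and>
     \<Omega> = interior (closure \<Omega>) \<and>
     (\<exists>\<P>. finite \<P> \<and> (\<forall>P\<in>\<P>. polytope P) \<and> closure \<Omega> = \<Union>\<P>)"

definition simplicial_mesh :: "'a::euclidean_space set set \<Rightarrow> 'a set \<Rightarrow> bool" where
  "simplicial_mesh \<T> \<Omega> \<longleftrightarrow> triangulation \<T> \<and>
     (\<forall>K\<in>\<T>. int DIM('a) simplex K) \<and> \<Union>\<T> = closure \<Omega>"

definition poly_deg_le :: "nat \<Rightarrow> ('a::euclidean_space \<Rightarrow> real) \<Rightarrow> bool" where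
  "poly_deg_le k f \<longleftrightarrow> (\<exists>A c. finite A \<and> (\<forall>\<alpha>\<in>A. (\<Sum>i\<in>Basis. \<alpha> i) \<le> k) \<and>
      f = (\<lambda>x. \<Sum>\<alpha>\<in>A. c \<alpha> * (\<Prod>i\<in>Basis. (x \<bullet> i) ^ \<alpha> i)))"

definition lagrange_space :: "'a::euclidean_space set \<Rightarrow> 'a set set \<Rightarrow> nat \<Rightarrow> ('a \<Rightarrow> real) set" where
  "lagrange_space \<Omega> \<T> k = {v. continuous_on (closure \<Omega>) v \<and>
      (\<forall>K\<in>\<T>. \<exists>f. poly_deg_le k f \<and> (\<forall>x\<in>K. v x = f x)) \<and>
      (\<forall>x. x \<notin> closure \<Omega> \<longrightarrow> v x = 0)}"

definition pderiv :: "('a::euclidean_space \<Rightarrow> real) \<Rightarrow> 'a \<Rightarrow> 'a \<Rightarrow> real" where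
  "pderiv f i x = frechet_derivative f (at x) i"

primrec Ck :: "nat \<Rightarrow> ('a::euclidean_space \<Rightarrow> real) \<Rightarrow> bool" where
  "Ck 0 f \<longleftrightarrow> continuous_on UNIV f"
| "Ck (Suc n) f \<longleftrightarrow> (\<forall>x. f differentiable (at x)) \<and> (\<forall>i\<in>Basis. Ck n (pderiv f i))"

definition smooth_fun :: "('a::euclidean_space \<Rightarrow> real) \<Rightarrow> bool" where
  "smooth_fun f \<longleftrightarrow> (\<forall>n. Ck n f)"

definition test_fun :: "'a::euclidean_space set \<Rightarrow> ('a \<Rightarrow> real) \<Rightarrow> bool" where
  "test_fun \<Omega> \<phi> \<longleftrightarrow> smooth_fun \<phi> \<and> (\<exists>K. compact K \<and> K \<subseteq> \<Omega> \<and> (\<forall>x. x \<notin> K \<longrightarrow> \<phi> x = 0))"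

definition L2 :: "'a::euclidean_space set \<Rightarrow> ('a \<Rightarrow> real) \<Rightarrow> bool" where
  "L2 \<Omega> f \<longleftrightarrow> f \<in> borel_measurable (lebesgue_on \<Omega>) \<and>
     integrable (lebesgue_on \<Omega>) (\<lambda>x. (f x)\<^sup>2)"

definition L2v :: "'a::euclidean_space set \<Rightarrow> ('a \<Rightarrow> 'a) \<Rightarrow> bool" where
  "L2v \<Omega> G \<longleftrightarrow> G \<in> borel_measurable (lebesgue_on \<Omega>) \<and>
     integrable (lebesgue_on \<Omega>) (\<lambda>x. (norm (G x))\<^sup>2)"

definition weak_grad :: "'a::euclidean_space set \<Rightarrow> ('a \<Rightarrow> real) \<Rightarrow> ('a \<Rightarrow> 'a) \<Rightarrow> bool" where
  "weak_grad \<Omega> v G \<longleftrightarrow> (\<forall>\<phi>. test_fun \<Omega> \<phi> \<longrightarrow> (\<forall>i\<in>Basis.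
      integral\<^sup>L (lebesgue_on \<Omega>) (\<lambda>x. v x * pderiv \<phi> i x) =
      - integral\<^sup>L (lebesgue_on \<Omega>) (\<lambda>x. (G x \<bullet> i) * \<phi> x)))"

definition H1 :: "'a::euclidean_space set \<Rightarrow> ('a \<Rightarrow> real) set" where
  "H1 \<Omega> = {v. L2 \<Omega> v \<and> (\<exists>G. L2v \<Omega> G \<and> weak_grad \<Omega> v G)}"

definition wgrad :: "'a::euclidean_space set \<Rightarrow> ('a \<Rightarrow> real) \<Rightarrow> 'a \<Rightarrow> 'a" where
  "wgrad \<Omega> v = (SOME G. L2v \<Omega> G \<and> weak_grad \<Omega> v G)"

definition grad_norm :: "'a::euclidean_space set \<Rightarrow> ('a \<Rightarrow> real) \<Rightarrow> real" where
  "grad_norm \<Omega> v = sqrt (integral\<^sup>L (lebesgue_on \<Omega>) (\<lambda>x. (norm (wgrad \<Omega> v x))\<^sup>2))"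

definition H1_norm :: "'a::euclidean_space set \<Rightarrow> ('a \<Rightarrow> real) \<Rightarrow> real" where
  "H1_norm \<Omega> v = sqrt (integral\<^sup>L (lebesgue_on \<Omega>) (\<lambda>x. (v x)\<^sup>2) +
                        integral\<^sup>L (lebesgue_on \<Omega>) (\<lambda>x. (norm (wgrad \<Omega> v x))\<^sup>2))"

definition H10 :: "'a::euclidean_space set \<Rightarrow> ('a \<Rightarrow> real) set" where
  "H10 \<Omega> = {v \<in> H1 \<Omega>. \<forall>e>0. \<exists>\<phi>. test_fun \<Omega> \<phi> \<and> H1_norm \<Omega> (\<lambda>x. v x - \<phi> x) < e}"

text \<open>Two H1 functions have the same trace on the boundary iff their difference
lies in H1_0 (kernel of the trace operator).  H^{1/2}(Gamma) is the trace space
H1/H1_0 with the quotient (minimal-extension) norm; the norm of the trace of u is:\<close>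
definition trace_norm :: "'a::euclidean_space set \<Rightarrow> ('a \<Rightarrow> real) \<Rightarrow> real" where
  "trace_norm \<Omega> u = Inf {H1_norm \<Omega> v | v. v \<in> H1 \<Omega> \<and> (\<lambda>x. v x - u x) \<in> H10 \<Omega>}"

definition lagrange_space0 :: "'a::euclidean_space set \<Rightarrow> 'a set set \<Rightarrow> nat \<Rightarrow> ('a \<Rightarrow> real) set" where
  "lagrange_space0 \<Omega> \<T> k = {v \<in> lagrange_space \<Omega> \<T> k. v \<in> H10 \<Omega>}"

end

theory Submission
  imports Defs "HOL-Computational_Algebra.Polynomial"
begin


lemma poly_exp_tendsto: "((\<lambda>s. poly p s * exp (- s)) \<longlongrightarrow> (0::real)) at_top"
proof -
  have "((\<lambda>s. (\<Sum>i\<le>degree p. coeff p i * (s ^ i / exp s))) \<longlongrightarrow> (\<Sum>i\<le>degree p. coeff p i * 0)) at_top"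
    by (intro tendsto_sum tendsto_mult tendsto_const tendsto_power_div_exp_0)
  then show ?thesis
    by (simp add: poly_altdef sum_divide_distrib exp_minus field_simps)
qed

lemma poly_exp_right0: "((\<lambda>t. poly p (1/t) * exp (- (1/t))) \<longlongrightarrow> (0::real)) (at_right 0)"
proof -
  have "filterlim (\<lambda>t::real. 1/t) at_top (at_right 0)"
    using filterlim_inverse_at_top_right by (simp add: inverse_eq_divide)
  from filterlim_compose[OF poly_exp_tendsto this] show ?thesis by simp
qed


fun Qp :: "nat \<Rightarrow> real poly" where
  "Qp 0 = 1"
| "Qp (Suc n) = [:0,0,1:] * (Qp n - Polynomial.pderiv (Qp n))"

definition bD :: "nat \<Rightarrow> real \<Rightarrow> real" where
  "bD n t = (if t > 0 then poly (Qp n) (1/t) * exp (- (1/t)) else 0)"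

lemma bD_pos_deriv:
  assumes "x > 0"
  shows "((\<lambda>t. poly q (1/t) * exp (- (1/t))) has_real_derivative
          poly ([:0,0,1:] * (q - Polynomial.pderiv q)) (1/x) * exp (- (1/x))) (at x)"
proof -
  have d1: "((\<lambda>t. 1/t) has_real_derivative (- 1 / x^2)) (at x)"
    using assms by (auto intro!: derivative_eq_intros simp: power2_eq_square field_simps)
  have "((\<lambda>t. poly q (1/t) * exp (- (1/t))) has_real_derivative
          (poly (Polynomial.pderiv q) (1/x) * (- 1 / x^2)) * exp (- (1/x))
          + poly q (1/x) * (exp (- (1/x)) * (- (- 1 / x^2)))) (at x)"
  proof -
    have A: "((\<lambda>t. poly q (1/t)) has_real_derivative poly (Polynomial.pderiv q) (1/x) * (- 1 / x^2)) (at x)"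
      using DERIV_chain2[OF poly_DERIV d1] by simp
    have "((\<lambda>t. - (1/t)) has_real_derivative - (- 1 / x^2)) (at x)"
      using d1 by (rule DERIV_minus)
    then have B: "((\<lambda>t. exp (- (1/t))) has_real_derivative exp (- (1/x)) * (- (- 1 / x^2))) (at x)"
      using DERIV_chain2[OF DERIV_exp] by blast
    show ?thesis using DERIV_mult[OF A B] by (simp add: algebra_simps)
  qed
  moreover have "(poly (Polynomial.pderiv q) (1/x) * (- 1 / x^2)) * exp (- (1/x))
          + poly q (1/x) * (exp (- (1/x)) * (- (- 1 / x^2)))
       = poly ([:0,0,1:] * (q - Polynomial.pderiv q)) (1/x) * exp (- (1/x))"
    using assms by (simp add: field_simps power2_eq_square)
  ultimately show ?thesis by simp
qed

lemma bD_deriv: "(bD n has_real_derivative bD (Suc n) x) (at x)"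
proof (cases "x > 0")
  case True
  have "((\<lambda>t. poly (Qp n) (1/t) * exp (- (1/t))) has_real_derivative bD (Suc n) x) (at x)"
    using bD_pos_deriv[OF True, of "Qp n"] True by (simp add: bD_def)
  then show ?thesis
    by (rule has_field_derivative_transform_within_open[where S="{0<..}"]) (use True in \<open>auto simp: bD_def\<close>)
next
  case False
  show ?thesis
  proof (cases "x < 0")
    case True
    have "((\<lambda>t. 0) has_real_derivative bD (Suc n) x) (at x)"
      using True by (simp add: bD_def)
    then show ?thesis
      by (rule has_field_derivative_transform_within_open[where S="{..<0}"]) (use True in \<open>auto simp: bD_def\<close>)
  next
    case False
    with \<open>\<not> x > 0\<close> have x0: "x = 0" by simp
    have r: "((\<lambda>t. (bD n t - bD n 0) / (t - 0)) \<longlongrightarrow> 0) (at_right 0)"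
    proof -
      have "((\<lambda>t. poly (Qp n * [:0,1:]) (1/t) * exp (- (1/t))) \<longlongrightarrow> 0) (at_right 0)"
        by (rule poly_exp_right0)
      moreover have "\<forall>\<^sub>F t in at_right 0. poly (Qp n * [:0,1:]) (1/t) * exp (- (1/t)) = (bD n t - bD n 0) / (t - 0)"
        by (auto simp: eventually_at_right_less bD_def eventually_at_right_field intro!: exI[of _ 1])
      ultimately show ?thesis by (rule Lim_transform_eventually)
    qed
    have l: "((\<lambda>t. (bD n t - bD n 0) / (t - 0)) \<longlongrightarrow> 0) (at_left 0)"
    proof -
      have "\<forall>\<^sub>F t in at_left (0::real). 0 = (bD n t - bD n 0) / (t - 0)"
        by (auto simp: bD_def eventually_at_left_field intro!: exI[of _ "-1"])
      then show ?thesis by (rule Lim_transform_eventually[OF tendsto_const])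
    qed
    have "((\<lambda>t. (bD n t - bD n 0) / (t - 0)) \<longlongrightarrow> 0) (at 0)"
      using r l by (simp add: filterlim_at_split)
    then show ?thesis unfolding x0 has_field_derivative_iff by (simp add: bD_def)
  qed
qed


lemma pderiv_eqI:
  assumes "\<And>x. (f has_derivative D x) (at x)"
  shows "Defs.pderiv f i = (\<lambda>x. D x i)"
proof
  fix x
  have "D x = frechet_derivative f (at x)"
    using assms by (rule frechet_derivative_at)
  then show "Defs.pderiv f i x = D x i" by (simp add: Defs.pderiv_def)
qed

lemma diff_has_frechet:
  assumes "f differentiable (at x)"
  shows "(f has_derivative (\<lambda>h. Defs.pderiv f h x)) (at x)"
  using assms frechet_derivative_works[of f "at x"] by (simp add: Defs.pderiv_def)

lemma pderiv_mult:
  assumes "\<And>x. f differentiable (at x)" "\<And>x. g differentiable (at x)"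
  shows "Defs.pderiv (\<lambda>x. f x * g x) i = (\<lambda>x. f x * Defs.pderiv g i x + Defs.pderiv f i x * g x)"
proof (rule pderiv_eqI)
  fix x
  show "((\<lambda>x. f x * g x) has_derivative (\<lambda>h. f x * Defs.pderiv g h x + Defs.pderiv f h x * g x)) (at x)"
    using has_derivative_mult[OF diff_has_frechet[OF assms(1)] diff_has_frechet[OF assms(2)]] .
qed

lemma pderiv_add:
  assumes "\<And>x. f differentiable (at x)" "\<And>x. g differentiable (at x)"
  shows "Defs.pderiv (\<lambda>x. f x + g x) i = (\<lambda>x. Defs.pderiv f i x + Defs.pderiv g i x)"
proof (rule pderiv_eqI)
  fix x
  show "((\<lambda>x. f x + g x) has_derivative (\<lambda>h. Defs.pderiv f h x + Defs.pderiv g h x)) (at x)"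
    using has_derivative_add[OF diff_has_frechet[OF assms(1)] diff_has_frechet[OF assms(2)]] .
qed

lemma pderiv_const: "Defs.pderiv (\<lambda>x. c) i = (\<lambda>x. 0)"
  by (rule pderiv_eqI) (rule has_derivative_const)

lemma gen_has_derivative:
  "((\<lambda>x::'a::euclidean_space. bD n (s * (x \<bullet> i) + t)) has_derivative
     (\<lambda>h. bD (Suc n) (s * (x \<bullet> i) + t) * (s * (h \<bullet> i)))) (at x)"
proof -
  have "((\<lambda>x::'a. s * (x \<bullet> i) + t) has_derivative (\<lambda>h. s * (h \<bullet> i))) (at x)"
    by (auto intro!: derivative_eq_intros)
  from has_derivative_compose[OF this bD_deriv[unfolded has_field_derivative_def]]
  show ?thesis by (simp add: o_def mult.commute)
qed

lemma pderiv_gen: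
  "Defs.pderiv (\<lambda>x::'a::euclidean_space. bD n (s * (x \<bullet> i) + t)) j =
     (\<lambda>x. bD (Suc n) (s * (x \<bullet> i) + t) * (s * (j \<bullet> i)))"
  by (rule pderiv_eqI) (rule gen_has_derivative)

inductive_set SM :: "('a::euclidean_space \<Rightarrow> real) set" where
  SM_const: "(\<lambda>x. c) \<in> SM"
| SM_gen: "(\<lambda>x. bD n (s * (x \<bullet> i) + t)) \<in> SM"
| SM_add: "f \<in> SM \<Longrightarrow> g \<in> SM \<Longrightarrow> (\<lambda>x. f x + g x) \<in> SM"
| SM_mult: "f \<in> SM \<Longrightarrow> g \<in> SM \<Longrightarrow> (\<lambda>x. f x * g x) \<in> SM"

lemma SM_props: "f \<in> SM \<Longrightarrow> (\<forall>x. f differentiable (at x)) \<and> (\<forall>j. Defs.pderiv f j \<in> SM)"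
proof (induction rule: SM.induct)
  case (SM_const c)
  then show ?case by (auto simp: pderiv_const intro: SM.intros)
next
  case (SM_gen n s i t)
  show ?case
    using gen_has_derivative[of n s i t]
    by (auto simp: pderiv_gen differentiable_def intro!: SM.intros)
next
  case (SM_add f g)
  then show ?case by (auto simp: pderiv_add intro!: SM.intros)
next
  case (SM_mult f g)
  then show ?case by (auto simp: pderiv_mult intro!: SM.intros)
qed

lemma Ck_SM: "f \<in> SM \<Longrightarrow> Ck n f"
proof (induction n arbitrary: f)
  case 0
  then show ?case using SM_props[OF 0]
    by (auto intro!: differentiable_imp_continuous_on simp: differentiable_on_def differentiable_at_withinI)
next
  case (Suc n)
  then show ?case using SM_props[OF Suc.prems] by auto
qed

lemma smooth_SM: "f \<in> SM \<Longrightarrow> smooth_fun f"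
  by (simp add: smooth_fun_def Ck_SM)

lemma SM_diff: "f \<in> SM \<Longrightarrow> g \<in> SM \<Longrightarrow> (\<lambda>x. f x - g x) \<in> SM"
proof -
  assume "f \<in> SM" "g \<in> SM"
  then have "(\<lambda>x. f x + (\<lambda>x. -1) x * g x) \<in> SM" by (intro SM.intros)
  then show ?thesis by simp
qed

lemma SM_power: "f \<in> SM \<Longrightarrow> (\<lambda>x. f x ^ m) \<in> SM"
proof (induction m)
  case 0 then show ?case using SM_const[of 1] by simp
next
  case (Suc m) then show ?case using SM_mult[OF Suc.prems Suc.IH] by simp
qed

lemma SM_prod: "finite S \<Longrightarrow> (\<And>i. i \<in> S \<Longrightarrow> F i \<in> SM) \<Longrightarrow> (\<lambda>x. \<Prod>i\<in>S. F i x) \<in> SM"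
proof (induction S rule: finite_induct)
  case empty then show ?case using SM_const[of 1] by simp
next
  case (insert a S) then show ?case using SM_mult[of "F a" "\<lambda>x. \<Prod>i\<in>S. F i x"] by simp
qed

lemma Ck_mono: "Ck (Suc n) f \<Longrightarrow> Ck n f"
proof (induction n arbitrary: f)
  case 0
  then show ?case
    by (auto intro!: differentiable_imp_continuous_on simp: differentiable_on_def differentiable_at_withinI)
next
  case (Suc n)
  then show ?case by auto
qed

lemma Ck_diffble: "Ck (Suc n) f \<Longrightarrow> f differentiable (at x)"
  by simp

lemma Ck_add: "Ck n f \<Longrightarrow> Ck n g \<Longrightarrow> Ck n (\<lambda>x. f x + g x)"
proof (induction n arbitrary: f g)
  case 0 then show ?case by (auto intro!: continuous_intros)
next
  case (Suc n)
  then show ?case by (auto simp: pderiv_add)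
qed

lemma Ck_const: "Ck n (\<lambda>x. c)"
  by (rule Ck_SM) (rule SM_const)

lemma Ck_mult: "Ck n f \<Longrightarrow> Ck n g \<Longrightarrow> Ck n (\<lambda>x. f x * g x)"
proof (induction n arbitrary: f g)
  case 0 then show ?case by (auto intro!: continuous_intros)
next
  case (Suc n)
  have df: "\<And>x. f differentiable (at x)" and dg: "\<And>x. g differentiable (at x)"
    using Suc.prems by auto
  have f: "Ck n f" and g: "Ck n g" using Suc.prems Ck_mono by blast+
  show ?case
  proof (simp only: Ck.simps, intro conjI allI ballI)
    fix x show "(\<lambda>x. f x * g x) differentiable (at x)"
      using df dg by (auto intro: differentiable_mult)
  next
    fix i :: 'a assume "i \<in> Basis"
    then have "Ck n (Defs.pderiv f i)" "Ck n (Defs.pderiv g i)" using Suc.prems by auto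
    then show "Ck n (Defs.pderiv (\<lambda>x. f x * g x) i)"
      using f g by (simp add: pderiv_mult[OF df dg] Ck_add Suc.IH)
  qed
qed


lemma FL_lborel:
  fixes g :: "'a::euclidean_space \<Rightarrow> real"
  assumes gm: "g \<in> borel_measurable lborel" and gi: "integrable lborel g"
    and box0: "\<And>l u. integral\<^sup>L lborel (\<lambda>x. indicator (box l u) x * g x) = 0"
  shows "AE x in lborel. g x = 0"
proof -
  let ?p = "\<lambda>x. ennreal (g x)" and ?n = "\<lambda>x. ennreal (- g x)"
  have pm: "?p \<in> borel_measurable lborel" and nm: "?n \<in> borel_measurable lborel" using gm by auto
  have pfin: "(\<integral>\<^sup>+ x. ?p x \<partial>lborel) < \<infinity>"
  proof -
    have "(\<integral>\<^sup>+ x. ?p x \<partial>lborel) \<le> (\<integral>\<^sup>+ x. ennreal (norm (g x)) \<partial>lborel)"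
      by (intro nn_integral_mono ennreal_leI) simp
    also have "\<dots> < \<infinity>" using gi by (simp add: integrable_iff_bounded)
    finally show ?thesis .
  qed
  have eqX: "emeasure (density lborel ?p) X = emeasure (density lborel ?n) X"
    if X: "X \<in> range (\<lambda>(a, b). box a b)" for X
  proof -
    obtain l u where Xb: "X = box l u" using X by auto
    have Xs: "X \<in> sets lborel" using Xb by simp
    have ip: "integrable lborel (\<lambda>x. max 0 (g x) * indicator X x)"
      using gi Xs by (intro integrable_real_mult_indicator Bochner_Integration.integrable_max) auto
    have inn: "integrable lborel (\<lambda>x. max 0 (- g x) * indicator X x)"
      using gi Xs by (intro integrable_real_mult_indicator Bochner_Integration.integrable_max) auto
    have "emeasure (density lborel ?p) X = (\<integral>\<^sup>+ x. ennreal (max 0 (g x) * indicator X x) \<partial>lborel)"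
      using pm Xs by (simp add: emeasure_density) (intro nn_integral_cong, auto simp: indicator_def max_def ennreal_neg)
    also have "\<dots> = ennreal (integral\<^sup>L lborel (\<lambda>x. max 0 (g x) * indicator X x))"
      using ip by (intro nn_integral_eq_integral) auto
    also have "integral\<^sup>L lborel (\<lambda>x. max 0 (g x) * indicator X x) = integral\<^sup>L lborel (\<lambda>x. max 0 (- g x) * indicator X x)"
    proof -
      have "integral\<^sup>L lborel (\<lambda>x. max 0 (g x) * indicator X x) - integral\<^sup>L lborel (\<lambda>x. max 0 (- g x) * indicator X x)
          = integral\<^sup>L lborel (\<lambda>x. max 0 (g x) * indicator X x - max 0 (- g x) * indicator X x)"
        using ip inn by simp
      also have "\<dots> = integral\<^sup>L lborel (\<lambda>x. indicator (box l u) x * g x)"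
        unfolding Xb by (intro Bochner_Integration.integral_cong) (auto simp: indicator_def max_def)
      finally show ?thesis using box0 by simp
    qed
    also have "ennreal (integral\<^sup>L lborel (\<lambda>x. max 0 (- g x) * indicator X x)) = (\<integral>\<^sup>+ x. ennreal (max 0 (- g x) * indicator X x) \<partial>lborel)"
      using inn by (intro nn_integral_eq_integral[symmetric]) auto
    also have "\<dots> = emeasure (density lborel ?n) X"
      using nm Xs by (simp add: emeasure_density) (intro nn_integral_cong, auto simp: indicator_def max_def ennreal_neg)
    finally show ?thesis .
  qed
  have dens: "density lborel ?p = density lborel ?n"
  proof (rule measure_eqI_generator_eq[where E="range (\<lambda>(a, b). box a b)" and \<Omega>=UNIV
        and A="\<lambda>n::nat. box (- (real n *\<^sub>R One)) (real n *\<^sub>R One)"])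
    show "Int_stable (range (\<lambda>(a, b). box a b::'a set))"
      by (auto simp: Int_stable_def box_Int_box)
    show "range (\<lambda>(a, b). box a b::'a set) \<subseteq> Pow UNIV" by simp
    show "sets (density lborel ?p) = sigma_sets UNIV (range (\<lambda>(a, b). box a b))"
      by (simp add: borel_eq_box)
    show "sets (density lborel ?n) = sigma_sets UNIV (range (\<lambda>(a, b). box a b))"
      by (simp add: borel_eq_box)
    show "range (\<lambda>n::nat. box (- (real n *\<^sub>R One)) (real n *\<^sub>R One) :: 'a set) \<subseteq> range (\<lambda>(a, b). box a b)"
      by auto
    show "(\<Union>n::nat. box (- (real n *\<^sub>R One)) (real n *\<^sub>R One) :: 'a set) = UNIV"
      unfolding UN_box_eq_UNIV by auto
    fix n :: nat
    have "emeasure (density lborel ?p) (box (- (real n *\<^sub>R One)) (real n *\<^sub>R One)) \<le> emeasure (density lborel ?p) UNIV"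
      by (intro emeasure_mono) auto
    also have "\<dots> = (\<integral>\<^sup>+ x. ?p x \<partial>lborel)"
      using pm by (simp add: emeasure_density)
    also have "\<dots> < \<infinity>" using pfin .
    finally show "emeasure (density lborel ?p) (box (- (real n *\<^sub>R One)) (real n *\<^sub>R One)) \<noteq> \<infinity>"
      by simp
  qed (use eqX in auto)
  have fin: "integral\<^sup>N lborel ?p \<noteq> \<infinity>"
    using pfin by simp
  have "AE x in lborel. ?p x = ?n x"
    using finite_density_unique[OF pm nm _ _ fin] dens by auto
  then show ?thesis
  proof (rule AE_mp[OF _ AE_I2], safe)
    fix x assume e: "ennreal (g x) = ennreal (- g x)"
    show "g x = 0"
    proof (cases "g x \<le> 0")
      case True
      then have "ennreal (- g x) = 0" using e ennreal_neg[OF True] by simp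
      then have "- g x \<le> 0" by (simp only: ennreal_eq_0_iff)
      then show ?thesis using True by simp
    next
      case False
      then have "ennreal (g x) = 0" using e ennreal_neg[of "- g x"] by simp
      then have "g x \<le> 0" by (simp only: ennreal_eq_0_iff)
      then show ?thesis using False by simp
    qed
  qed
qed


lemma open_box_cover:
  fixes \<Omega> :: "'a::euclidean_space set"
  assumes "open \<Omega>"
  obtains \<C> where "countable \<C>" "\<Omega> = \<Union>\<C>" "\<And>C. C \<in> \<C> \<Longrightarrow> (\<exists>a b. C = box a b) \<and> C \<subseteq> \<Omega>"
proof -
  define a' where "a' \<equiv> \<lambda>f :: 'a \<Rightarrow> real \<times> real. (\<Sum>(i::'a)\<in>Basis. fst (f i) *\<^sub>R i)"
  define b' where "b' \<equiv> \<lambda>f :: 'a \<Rightarrow> real \<times> real. (\<Sum>(i::'a)\<in>Basis. snd (f i) *\<^sub>R i)"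
  define I where "I \<equiv> {f\<in>Basis \<rightarrow>\<^sub>E \<rat> \<times> \<rat>. box (a' f) (b' f) \<subseteq> \<Omega>}"
  have eq: "\<Omega> = (\<Union>f\<in>I. box (a' f) (b' f))"
    using open_UNION_box[OF assms] unfolding a'_def b'_def I_def by blast
  have "countable (Basis \<rightarrow>\<^sub>E (\<rat> \<times> \<rat>) :: ('a \<Rightarrow> real \<times> real) set)"
    by (intro countable_PiE finite_Basis) (auto intro: countable_rat)
  then have "countable I" unfolding I_def by (rule countable_subset[rotated]) auto
  show ?thesis
  proof (rule that[of "(\<lambda>f. box (a' f) (b' f)) ` I"])
    show "countable ((\<lambda>f. box (a' f) (b' f)) ` I)" using \<open>countable I\<close> by simp
    show "\<Omega> = \<Union> ((\<lambda>f. box (a' f) (b' f)) ` I)" using eq by simp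
    show "\<And>C. C \<in> (\<lambda>f. box (a' f) (b' f)) ` I \<Longrightarrow> (\<exists>a b. C = box a b) \<and> C \<subseteq> \<Omega>"
      unfolding I_def by auto
  qed
qed

lemma open_sets_lebesgue: "open (\<Omega>::'a::euclidean_space set) \<Longrightarrow> \<Omega> \<in> sets lebesgue"
  by (simp add: borel_open)

lemma FL_local:
  fixes F :: "'a::euclidean_space \<Rightarrow> real"
  assumes \<Omega>: "open \<Omega>" and Fm: "F \<in> borel_measurable (lebesgue_on \<Omega>)"
    and Fi: "integrable (lebesgue_on \<Omega>) F"
    and box0: "\<And>p q. box p q \<subseteq> \<Omega> \<Longrightarrow> integral\<^sup>L (lebesgue_on \<Omega>) (\<lambda>x. indicator (box p q) x * F x) = 0"
  shows "AE x in lebesgue_on \<Omega>. F x = 0"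
proof -
  have \<Omega>s: "\<Omega> \<in> sets lebesgue" using \<Omega> by (rule open_sets_lebesgue)
  then have \<Omega>s': "\<Omega> \<inter> space lebesgue \<in> sets lebesgue" by simp
  define H where "H x = indicator \<Omega> x * F x" for x
  have Hi: "integrable lebesgue H"
    using Fi unfolding H_def integrable_restrict_space[OF \<Omega>s'] by simp
  have Hm: "H \<in> borel_measurable lebesgue"
    using Hi by (rule borel_measurable_integrable)
  have loc: "AE x in lebesgue. x \<in> B \<longrightarrow> F x = 0" if B: "B = box a b" "B \<subseteq> \<Omega>" for B a b
  proof -
    define g where "g x = indicator B x * H x" for x
    have Bs: "B \<in> sets lebesgue" using B by simp
    have gi: "integrable lebesgue g" unfolding g_def
      using integrable_mult_indicator[OF Bs Hi] by simp
    have gm: "g \<in> borel_measurable lebesgue" using gi by (rule borel_measurable_integrable)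
    have g0: "integral\<^sup>L lebesgue (\<lambda>x. indicator (box l u) x * g x) = 0" for l u
    proof -
      obtain c d where cd: "box l u \<inter> B = box c d" using B box_Int_box by blast
      have "integral\<^sup>L lebesgue (\<lambda>x. indicator (box l u) x * g x)
          = integral\<^sup>L lebesgue (\<lambda>x. indicator \<Omega> x *\<^sub>R (indicator (box c d) x * F x))"
        unfolding g_def H_def cd[symmetric]
        by (intro Bochner_Integration.integral_cong) (auto simp: indicator_def)
      also have "\<dots> = integral\<^sup>L (lebesgue_on \<Omega>) (\<lambda>x. indicator (box c d) x * F x)"
        by (rule integral_restrict_space[OF \<Omega>s', symmetric])
      also have "\<dots> = 0" using B cd by (intro box0) auto
      finally show ?thesis .
    qed
    obtain g' where g'm: "g' \<in> borel_measurable lborel" and gg': "AE x in lborel. g x = g' x"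
      using completion_ex_borel_measurable_real[OF gm] by blast
    have gg'L: "AE x in lebesgue. g x = g' x" using gg' by (rule AE_completion)
    have "integrable lebesgue g'"
      by (rule integrable_cong_AE_imp[OF gi measurable_completion[OF g'm] gg'L])
    then have g'i: "integrable lborel g'" using integrable_completion[OF g'm] by simp
    have "integral\<^sup>L lborel (\<lambda>x. indicator (box l u) x * g' x) = 0" for l u
    proof -
      have "integral\<^sup>L lborel (\<lambda>x. indicator (box l u) x * g' x) = integral\<^sup>L lebesgue (\<lambda>x. indicator (box l u) x * g' x)"
        using g'm by (intro integral_completion[symmetric]) auto
      also have "\<dots> = integral\<^sup>L lebesgue (\<lambda>x. indicator (box l u) x * g x)"
      proof (rule integral_cong_AE)
        show "(\<lambda>x. indicator (box l u) x * g' x) \<in> borel_measurable lebesgue"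
          by (intro borel_measurable_times borel_measurable_indicator measurable_completion[OF g'm]) simp
        show "(\<lambda>x. indicator (box l u) x * g x) \<in> borel_measurable lebesgue"
          by (intro borel_measurable_times borel_measurable_indicator gm) simp
        show "AE x in lebesgue. indicat_real (box l u) x * g' x = indicat_real (box l u) x * g x"
          using gg'L by (rule AE_mp[OF _ AE_I2]) auto
      qed
      finally show ?thesis using g0 by simp
    qed
    from FL_lborel[OF g'm g'i this] have "AE x in lborel. g' x = 0" .
    then have "AE x in lebesgue. g' x = 0" by (rule AE_completion)
    with gg'L show ?thesis
      by eventually_elim (use B in \<open>auto simp: g_def H_def indicator_def split: if_splits\<close>)
  qed
  obtain \<C> where C: "countable \<C>" "\<Omega> = \<Union>\<C>" "\<And>C. C \<in> \<C> \<Longrightarrow> (\<exists>a b. C = box a b) \<and> C \<subseteq> \<Omega>"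
    using open_box_cover[OF \<Omega>] by blast
  have "\<forall>C\<in>\<C>. AE x in lebesgue. x \<in> C \<longrightarrow> F x = 0"
    using C(3) loc by blast
  then have "AE x in lebesgue. \<forall>C\<in>\<C>. x \<in> C \<longrightarrow> F x = 0"
    using AE_ball_countable[OF C(1), of "\<lambda>x C. x \<in> C \<longrightarrow> F x = 0" lebesgue] by blast
  then have "AE x in lebesgue. x \<in> \<Omega> \<longrightarrow> F x = 0"
    by (rule AE_mp[OF _ AE_I2]) (use C(2) in auto)
  then show ?thesis using AE_restrict_space_iff[OF \<Omega>s'] by simp
qed


lemma psi_pos: "t > 0 \<Longrightarrow> bD 0 t = exp (- (1/t))"
  by (simp add: bD_def)
lemma psi_nonpos: "t \<le> 0 \<Longrightarrow> bD 0 t = 0"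
  by (simp add: bD_def)
lemma psi_ge0: "0 \<le> bD 0 t"
  by (simp add: bD_def)
lemma psi_le1: "bD 0 t \<le> 1"
  by (simp add: bD_def)
lemma psi_gt0: "t > 0 \<Longrightarrow> bD 0 t > 0"
  by (simp add: bD_def)
lemma psi_mono: "s \<le> t \<Longrightarrow> bD 0 s \<le> bD 0 t"
proof (cases "s > 0")
  case True
  assume st: "s \<le> t"
  then have "- (1/s) \<le> - (1/t)" using True by (simp add: frac_le)
  then show ?thesis using True st by (simp add: bD_def)
next
  case False
  then show ?thesis using psi_ge0[of t] by (simp add: bD_def)
qed

definition Phi :: "'a::euclidean_space \<Rightarrow> 'a \<Rightarrow> real \<Rightarrow> 'a \<Rightarrow> real" where
  "Phi p q e x = (\<Prod>i\<in>Basis. bD 0 (x \<bullet> i - p \<bullet> i - e) * bD 0 (q \<bullet> i - e - x \<bullet> i))"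

lemma Phi_SM: "Phi p q e \<in> SM"
proof -
  have "(\<lambda>x. \<Prod>i\<in>Basis. (\<lambda>x. bD 0 (1 * (x \<bullet> i) + (- (p \<bullet> i) - e)) * bD 0 ((-1) * (x \<bullet> i) + (q \<bullet> i - e))) x) \<in> SM"
    by (intro SM_prod SM_mult SM_gen) auto
  moreover have "(\<lambda>x. \<Prod>i\<in>Basis. (\<lambda>x. bD 0 (1 * (x \<bullet> i) + (- (p \<bullet> i) - e)) * bD 0 ((-1) * (x \<bullet> i) + (q \<bullet> i - e))) x) = Phi p q e"
    unfolding Phi_def by (simp add: algebra_simps)
  ultimately show ?thesis by simp
qed

lemma Phi_ge0: "0 \<le> Phi p q e x"
  unfolding Phi_def by (intro prod_nonneg) (auto intro: mult_nonneg_nonneg psi_ge0)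

lemma Phi_le1: "Phi p q e x \<le> 1"
  unfolding Phi_def
  by (intro prod_le_1) (auto intro: mult_nonneg_nonneg psi_ge0 mult_le_one psi_le1)

lemma Phi_nz: "Phi p q e x \<noteq> 0 \<Longrightarrow> i \<in> Basis \<Longrightarrow> p \<bullet> i + e < x \<bullet> i \<and> x \<bullet> i < q \<bullet> i - e"
proof (rule ccontr)
  assume nz: "Phi p q e x \<noteq> 0" and i: "i \<in> Basis" and c: "\<not> (p \<bullet> i + e < x \<bullet> i \<and> x \<bullet> i < q \<bullet> i - e)"
  then have "bD 0 (x \<bullet> i - p \<bullet> i - e) * bD 0 (q \<bullet> i - e - x \<bullet> i) = 0"
    by (auto simp: psi_nonpos)
  then have "Phi p q e x = 0" unfolding Phi_def using i by (intro prod_zero) auto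
  with nz show False by simp
qed

lemma Phi_pos:
  assumes "\<And>i. i \<in> Basis \<Longrightarrow> p \<bullet> i + e < x \<bullet> i \<and> x \<bullet> i < q \<bullet> i - e"
  shows "Phi p q e x > 0"
  unfolding Phi_def
proof (intro prod_pos mult_pos_pos psi_gt0)
  fix i :: 'a assume "i \<in> Basis"
  from assms[OF this] show "0 < x \<bullet> i - p \<bullet> i - e" "0 < q \<bullet> i - e - x \<bullet> i" by linarith+
qed

lemma Phi_mono: "e' \<le> e \<Longrightarrow> Phi p q e x \<le> Phi p q e' x"
  unfolding Phi_def
  by (intro prod_mono conjI mult_mono psi_mono mult_nonneg_nonneg psi_ge0) auto

lemma test_fun_SM:
  assumes "f \<in> SM" and K: "compact K" "K \<subseteq> \<Omega>" "\<And>x. x \<notin> K \<Longrightarrow> f x = 0"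
  shows "test_fun \<Omega> f"
  using assms smooth_SM unfolding test_fun_def by blast

lemma SM_cont: "f \<in> SM \<Longrightarrow> continuous_on S f"
  using Ck_SM[of f 0] by (auto intro: continuous_on_subset)


definition gseq :: "'a::euclidean_space \<Rightarrow> 'a \<Rightarrow> nat \<Rightarrow> 'a \<Rightarrow> real" where
  "gseq p q n x = 1 - (1 - Phi p q (1 / Suc n) x) ^ n"

lemma gseq_SM: "gseq p q n \<in> SM"
proof -
  have "(\<lambda>x. (\<lambda>x. 1) x - (\<lambda>x. (\<lambda>x. (\<lambda>x. 1) x - Phi p q (1 / Suc n) x) x ^ n) x) \<in> SM"
    by (intro SM_diff SM_power SM_const Phi_SM)
  then show ?thesis by (simp add: gseq_def[abs_def])
qed

lemma gseq_range: "0 \<le> gseq p q n x" "gseq p q n x \<le> 1"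
proof -
  have a: "0 \<le> 1 - Phi p q (1 / Suc n) x" "1 - Phi p q (1 / Suc n) x \<le> 1"
    using Phi_ge0 Phi_le1 by (auto simp: algebra_simps)
  have "(1 - Phi p q (1 / Suc n) x) ^ n \<le> 1" using a by (intro power_le_one) auto
  then show "0 \<le> gseq p q n x" by (simp add: gseq_def)
  show "gseq p q n x \<le> 1" using a by (simp add: gseq_def)
qed

lemma gseq_test:
  assumes "box p q \<subseteq> \<Omega>"
  shows "test_fun \<Omega> (gseq p q n)"
proof (rule test_fun_SM[OF gseq_SM])
  let ?e = "1 / real (Suc n)"
  let ?K = "cbox (p + ?e *\<^sub>R One) (q - ?e *\<^sub>R One)"
  show "compact ?K" by simp
  have e0: "?e > 0" by simp
  have "?K \<subseteq> box p q"
  proof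
    fix y assume "y \<in> ?K"
    then have "\<forall>i\<in>Basis. p \<bullet> i + ?e \<le> y \<bullet> i \<and> y \<bullet> i \<le> q \<bullet> i - ?e"
      by (simp add: mem_box inner_simps)
    then show "y \<in> box p q" using e0 unfolding mem_box
    proof (intro ballI)
      fix i :: 'a assume "\<forall>i\<in>Basis. p \<bullet> i + ?e \<le> y \<bullet> i \<and> y \<bullet> i \<le> q \<bullet> i - ?e" "i \<in> Basis"
      then have "p \<bullet> i + ?e \<le> y \<bullet> i \<and> y \<bullet> i \<le> q \<bullet> i - ?e" by blast
      with e0 show "p \<bullet> i < y \<bullet> i \<and> y \<bullet> i < q \<bullet> i" by linarith
    qed
  qed
  then show "?K \<subseteq> \<Omega>" using assms by blast
  fix x assume "x \<notin> ?K"
  then obtain i where i: "i \<in> Basis" "\<not> (p \<bullet> i + ?e \<le> x \<bullet> i \<and> x \<bullet> i \<le> q \<bullet> i - ?e)"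
    by (auto simp: mem_box inner_simps)
  then have "Phi p q ?e x = 0" using Phi_nz[of p q ?e x i] by force
  then show "gseq p q n x = 0" by (simp add: gseq_def)
qed

lemma gseq_lim: "(\<lambda>n. gseq p q n x) \<longlonglongrightarrow> indicator (box p q) x"
proof (cases "x \<in> box p q")
  case False
  have "gseq p q n x = 0" for n
  proof -
    have "Phi p q (1 / Suc n) x = 0"
    proof (rule ccontr)
      assume "Phi p q (1 / Suc n) x \<noteq> 0"
      moreover have "(1::real) / Suc n > 0" by simp
      ultimately have "\<forall>i\<in>Basis. p \<bullet> i < x \<bullet> i \<and> x \<bullet> i < q \<bullet> i"
      proof (intro ballI)
        fix i :: 'a assume "i \<in> Basis" "Phi p q (1 / Suc n) x \<noteq> 0" "(1::real) / Suc n > 0"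
        with Phi_nz[of p q "1 / Suc n" x i] show "p \<bullet> i < x \<bullet> i \<and> x \<bullet> i < q \<bullet> i" by linarith
      qed
      then show False using False by (auto simp: mem_box)
    qed
    then show ?thesis by (simp add: gseq_def)
  qed
  then show ?thesis using False by simp
next
  case True
  define S where "S = ((\<lambda>i. x \<bullet> i - p \<bullet> i) ` Basis \<union> (\<lambda>i. q \<bullet> i - x \<bullet> i) ` Basis)"
  define m where "m = Min S"
  have Sfin: "finite S" unfolding S_def by simp
  have Sne: "S \<noteq> {}" unfolding S_def using nonempty_Basis by blast
  have Spos: "\<forall>a\<in>S. 0 < a" unfolding S_def using True by (auto simp: mem_box)
  have m0: "m > 0" unfolding m_def using Min_gr_iff[OF Sfin Sne] Spos by blast
  have mle: "m \<le> x \<bullet> i - p \<bullet> i" "m \<le> q \<bullet> i - x \<bullet> i" if "i \<in> Basis" for i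
    unfolding m_def using that Sfin by (auto intro!: Min_le simp: S_def)
  obtain N where N: "1 / real (Suc N) < m"
    using m0 nat_approx_posE by blast
  define c where "c = Phi p q (1 / Suc N) x"
  have c0: "c > 0" unfolding c_def
  proof (rule Phi_pos)
    fix i :: 'a assume i: "i \<in> Basis"
    from mle[OF i] N show "p \<bullet> i + 1 / real (Suc N) < x \<bullet> i \<and> x \<bullet> i < q \<bullet> i - 1 / real (Suc N)"
      by linarith
  qed
  have c1: "c \<le> 1" unfolding c_def by (rule Phi_le1)
  have evb: "(1 - Phi p q (1 / Suc n) x) ^ n \<le> (1 - c) ^ n" if "N \<le> n" for n
  proof -
    from that have "1 / real (Suc n) \<le> 1 / real (Suc N)" by (simp add: frac_le)
    then have "c \<le> Phi p q (1 / Suc n) x" unfolding c_def by (rule Phi_mono)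
    moreover have "Phi p q (1 / Suc n) x \<le> 1" by (rule Phi_le1)
    ultimately show ?thesis by (intro power_mono) auto
  qed
  have ge0: "0 \<le> (1 - Phi p q (1 / Suc n) x) ^ n" for n
    using Phi_le1[of p q "1 / Suc n" x] by simp
  have "(\<lambda>n. (1 - c) ^ n) \<longlonglongrightarrow> 0" using c0 c1 by (intro LIMSEQ_power_zero) auto
  moreover have "\<forall>\<^sub>F n in sequentially. (1 - Phi p q (1 / Suc n) x) ^ n \<le> (1 - c) ^ n"
    using evb by (rule eventually_sequentiallyI)
  moreover have "\<forall>\<^sub>F n in sequentially. (0::real) \<le> (1 - Phi p q (1 / Suc n) x) ^ n"
    using ge0 by (rule always_eventually[OF allI])
  ultimately have "(\<lambda>n. (1 - Phi p q (1 / Suc n) x) ^ n) \<longlonglongrightarrow> 0"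
    using tendsto_sandwich[of "\<lambda>_. 0" "\<lambda>n. (1 - Phi p q (1 / Suc n) x) ^ n" sequentially "\<lambda>n. (1 - c) ^ n" 0]
    by simp
  then have "(\<lambda>n. 1 - (1 - Phi p q (1 / Suc n) x) ^ n) \<longlonglongrightarrow> 1 - 0"
    by (intro tendsto_diff tendsto_const)
  then show ?thesis using True by (simp add: gseq_def)
qed

lemma box_integral_zero:
  fixes F :: "'a::euclidean_space \<Rightarrow> real"
  assumes \<Omega>: "open \<Omega>" and Fi: "integrable (lebesgue_on \<Omega>) F"
    and T: "\<And>\<phi>. test_fun \<Omega> \<phi> \<Longrightarrow> integral\<^sup>L (lebesgue_on \<Omega>) (\<lambda>x. F x * \<phi> x) = 0"
    and B: "box p q \<subseteq> \<Omega>"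
  shows "integral\<^sup>L (lebesgue_on \<Omega>) (\<lambda>x. indicator (box p q) x * F x) = 0"
proof -
  have \<Omega>s: "\<Omega> \<in> sets lebesgue" using \<Omega> by (rule open_sets_lebesgue)
  have Fm: "F \<in> borel_measurable (lebesgue_on \<Omega>)" using Fi by (rule borel_measurable_integrable)
  have gm: "gseq p q n \<in> borel_measurable (lebesgue_on \<Omega>)" for n
    by (rule continuous_imp_measurable_on_sets_lebesgue[OF SM_cont[OF gseq_SM] \<Omega>s])
  have lim: "(\<lambda>n. integral\<^sup>L (lebesgue_on \<Omega>) (\<lambda>x. F x * gseq p q n x))
      \<longlonglongrightarrow> integral\<^sup>L (lebesgue_on \<Omega>) (\<lambda>x. F x * indicator (box p q) x)"
  proof (rule integral_dominated_convergence[where w="\<lambda>x. norm (F x)"])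
    show "(\<lambda>x. F x * indicator (box p q) x) \<in> borel_measurable (lebesgue_on \<Omega>)"
      using Fm B \<Omega>s by (intro borel_measurable_times borel_measurable_indicator) (auto simp: sets_restrict_space_iff)
    show "(\<lambda>x. F x * gseq p q n x) \<in> borel_measurable (lebesgue_on \<Omega>)" for n
      using Fm gm by (intro borel_measurable_times)
    show "integrable (lebesgue_on \<Omega>) (\<lambda>x. norm (F x))" using Fi by simp
    show "AE x in lebesgue_on \<Omega>. (\<lambda>n. F x * gseq p q n x) \<longlonglongrightarrow> F x * indicator (box p q) x"
      by (intro AE_I2 tendsto_mult tendsto_const gseq_lim)
    show "AE x in lebesgue_on \<Omega>. norm (F x * gseq p q n x) \<le> norm (F x)" for n
      using gseq_range[of p q n] by (intro AE_I2) (auto simp: abs_mult intro: mult_left_le)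
  qed
  have "(\<lambda>n. integral\<^sup>L (lebesgue_on \<Omega>) (\<lambda>x. F x * gseq p q n x)) = (\<lambda>n. 0)"
    using T gseq_test[OF B] by auto
  with lim have "integral\<^sup>L (lebesgue_on \<Omega>) (\<lambda>x. F x * indicator (box p q) x) = 0"
    using LIMSEQ_unique tendsto_const by metis
  then show ?thesis by (simp add: mult.commute)
qed

theorem FL:
  fixes F :: "'a::euclidean_space \<Rightarrow> real"
  assumes \<Omega>: "open \<Omega>" and Fi: "integrable (lebesgue_on \<Omega>) F"
    and T: "\<And>\<phi>. test_fun \<Omega> \<phi> \<Longrightarrow> integral\<^sup>L (lebesgue_on \<Omega>) (\<lambda>x. F x * \<phi> x) = 0"
  shows "AE x in lebesgue_on \<Omega>. F x = 0"
  using FL_local[OF \<Omega> borel_measurable_integrable[OF Fi] Fi box_integral_zero[OF \<Omega> Fi T]] .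


lemma supp_bounded:
  fixes f :: "'a::euclidean_space \<Rightarrow> real"
  assumes "continuous_on UNIV f" "compact K" "\<And>x. x \<notin> K \<Longrightarrow> f x = 0"
  obtains M where "\<And>x. \<bar>f x\<bar> \<le> M"
proof -
  have "compact (f ` K)" using assms by (intro compact_continuous_image) (auto intro: continuous_on_subset)
  then obtain M where M: "\<And>y. y \<in> f ` K \<Longrightarrow> norm y \<le> M"
    using compact_imp_bounded bounded_iff by metis
  have "\<bar>f x\<bar> \<le> max M 0" for x
    using M[of "f x"] assms(3)[of x] by (cases "x \<in> K") auto
  then show ?thesis using that by blast
qed

lemma supp_integrable:
  fixes f :: "'a::euclidean_space \<Rightarrow> real"
  assumes "continuous_on UNIV f" "compact K" "\<And>x. x \<notin> K \<Longrightarrow> f x = 0"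
  shows "integrable lborel f"
proof -
  have "integrable lborel (\<lambda>x. indicator K x *\<^sub>R f x)"
    using assms by (intro borel_integrable_compact) (auto intro: continuous_on_subset)
  moreover have "(\<lambda>x. indicator K x *\<^sub>R f x) = f"
    using assms(3) by (auto simp: indicator_def fun_eq_iff)
  ultimately show ?thesis by simp
qed

lemma test_fun_props:
  fixes \<theta> :: "'a::euclidean_space \<Rightarrow> real"
  assumes "test_fun \<Omega> \<theta>"
  obtains K where "compact K" "K \<subseteq> \<Omega>" "\<And>x. x \<notin> K \<Longrightarrow> \<theta> x = 0"
    "continuous_on UNIV \<theta>" "\<And>x. \<theta> differentiable (at x)"
    "\<And>i. i \<in> Basis \<Longrightarrow> continuous_on UNIV (Defs.pderiv \<theta> i)"
    "\<And>i x. x \<notin> K \<Longrightarrow> Defs.pderiv \<theta> i x = 0"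
proof -
  from assms obtain K where K: "compact K" "K \<subseteq> \<Omega>" "\<And>x. x \<notin> K \<Longrightarrow> \<theta> x = 0"
    and sm: "smooth_fun \<theta>" unfolding test_fun_def by blast
  have C1: "Ck 1 \<theta>" and C0: "Ck 0 \<theta>" using sm unfolding smooth_fun_def by blast+
  have d: "\<And>x. \<theta> differentiable (at x)" using C1 by simp
  have pc: "\<And>i. i \<in> Basis \<Longrightarrow> continuous_on UNIV (Defs.pderiv \<theta> i)" using C1 by simp
  have pz: "Defs.pderiv \<theta> i x = 0" if x: "x \<notin> K" for i x
  proof -
    have "open (- K)" using K(1) by (simp add: compact_imp_closed open_Compl)
    have "((\<lambda>_. 0) has_derivative (\<lambda>_. 0)) (at x)" by (rule has_derivative_const)
    then have "(\<theta> has_derivative (\<lambda>_. 0)) (at x)"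
      by (rule has_derivative_transform_within_open[OF _ \<open>open (- K)\<close>]) (use x K(3) in auto)
    then have "(\<lambda>_. 0) = frechet_derivative \<theta> (at x)" by (rule frechet_derivative_at)
    then show ?thesis unfolding Defs.pderiv_def by (metis)
  qed
  show ?thesis using that K C0 d pc pz by simp
qed

lemma dir_deriv:
  fixes \<theta> :: "'a::euclidean_space \<Rightarrow> real"
  assumes d: "\<And>x. \<theta> differentiable (at x)"
  shows "((\<lambda>s. \<theta> (x + s *\<^sub>R i)) has_real_derivative Defs.pderiv \<theta> i (x + s *\<^sub>R i)) (at s)"
proof -
  have l: "((\<lambda>s. x + s *\<^sub>R i) has_derivative (\<lambda>h. h *\<^sub>R i)) (at s)"
    by (auto intro!: derivative_eq_intros)
  have t: "(\<theta> has_derivative (\<lambda>h. Defs.pderiv \<theta> h (x + s *\<^sub>R i))) (at (x + s *\<^sub>R i))"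
    using diff_has_frechet[OF d] .
  have lin: "linear (\<lambda>h. Defs.pderiv \<theta> h (x + s *\<^sub>R i))" using has_derivative_linear[OF t] .
  from has_derivative_compose[OF l t]
  have "((\<lambda>s. \<theta> (x + s *\<^sub>R i)) has_derivative (\<lambda>h. Defs.pderiv \<theta> (h *\<^sub>R i) (x + s *\<^sub>R i))) (at s)"
    by (simp add: o_def)
  moreover have "(\<lambda>h. Defs.pderiv \<theta> (h *\<^sub>R i) (x + s *\<^sub>R i)) = (\<lambda>h. h * Defs.pderiv \<theta> i (x + s *\<^sub>R i))"
    using linear_scale[OF lin] by auto
  ultimately have "((\<lambda>s. \<theta> (x + s *\<^sub>R i)) has_derivative (\<lambda>h. h * Defs.pderiv \<theta> i (x + s *\<^sub>R i))) (at s)"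
    by simp
  then show ?thesis by (simp add: has_field_derivative_def mult_commute_abs)
qed

lemma integral_pderiv_zero:
  fixes \<theta> :: "'a::euclidean_space \<Rightarrow> real"
  assumes T: "test_fun \<Omega> \<theta>" and i: "i \<in> Basis"
  shows "integral\<^sup>L lborel (Defs.pderiv \<theta> i) = 0"
proof -
  obtain K where K: "compact K" "K \<subseteq> \<Omega>" "\<And>x. x \<notin> K \<Longrightarrow> \<theta> x = 0"
    and c: "continuous_on UNIV \<theta>" and d: "\<And>x. \<theta> differentiable (at x)"
    and pc: "continuous_on UNIV (Defs.pderiv \<theta> i)" and pz: "\<And>x. x \<notin> K \<Longrightarrow> Defs.pderiv \<theta> i x = 0"
    using test_fun_props[OF T] i by metis
  obtain M where M: "\<And>x. \<bar>Defs.pderiv \<theta> i x\<bar> \<le> M" using supp_bounded[OF pc K(1) pz] by blast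
  define K1 where "K1 = (\<lambda>(y, s). y - s *\<^sub>R i) ` (K \<times> {0..1::real})"
  have K1c: "compact K1" unfolding K1_def
    by (intro compact_continuous_image compact_Times K(1) compact_Icc) (auto intro!: continuous_intros simp: case_prod_unfold)
  have Ti: "integrable lborel \<theta>" by (rule supp_integrable[OF c K(1) K(3)])
  have \<theta>m: "\<theta> \<in> borel_measurable lborel" using c by (simp add: borel_measurable_continuous_onI)
  define D where "D n x = (\<theta> (x + (1 / Suc n) *\<^sub>R i) - \<theta> x) / (1 / Suc n)" for n x
  have trans: "integral\<^sup>L lborel (\<lambda>x. \<theta> (x + c)) = integral\<^sup>L lborel \<theta>" for c
  proof -
    have "integral\<^sup>L lborel \<theta> = integral\<^sup>L (distr lborel borel ((+) c)) \<theta>"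
      by (simp add: lborel_distr_plus)
    also have "\<dots> = integral\<^sup>L lborel (\<lambda>x. \<theta> (c + x))"
      using \<theta>m by (intro integral_distr) auto
    finally show ?thesis by (simp add: add.commute)
  qed
  have Tci: "integrable lborel (\<lambda>x. \<theta> (x + c))" for c
  proof -
    have "integrable (distr lborel borel ((+) c)) \<theta>" using Ti by (simp add: lborel_distr_plus)
    then have "integrable lborel (\<lambda>x. \<theta> (c + x))"
      using \<theta>m by (subst (asm) integrable_distr_eq) auto
    then show ?thesis by (simp add: add.commute)
  qed
  have D0: "integral\<^sup>L lborel (D n) = 0" for n
  proof -
    have "integral\<^sup>L lborel (D n) = (integral\<^sup>L lborel (\<lambda>x. \<theta> (x + (1 / Suc n) *\<^sub>R i)) - integral\<^sup>L lborel \<theta>) / (1 / Suc n)"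
      unfolding D_def using Tci Ti by simp
    then show ?thesis using trans by simp
  qed
  have lim: "(\<lambda>n. D n x) \<longlonglongrightarrow> Defs.pderiv \<theta> i x" for x
  proof -
    have "((\<lambda>s. \<theta> (x + s *\<^sub>R i)) has_real_derivative Defs.pderiv \<theta> i (x + 0 *\<^sub>R i)) (at 0)"
      by (rule dir_deriv[OF d])
    then have A: "((\<lambda>s. (\<theta> (x + s *\<^sub>R i) - \<theta> x) / s) \<longlongrightarrow> Defs.pderiv \<theta> i x) (at 0)"
      by (simp add: has_field_derivative_iff)
    have B: "filterlim (\<lambda>n. 1 / real (Suc n)) (at 0) sequentially"
      unfolding filterlim_at using LIMSEQ_inverse_real_of_nat by (simp add: inverse_eq_divide)
    show ?thesis using filterlim_compose[OF A B] unfolding D_def by simp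
  qed
  have bound: "\<bar>D n x\<bar> \<le> M * indicator K1 x" for n x
  proof (cases "x \<in> K1")
    case False
    have "x + (1 / Suc n) *\<^sub>R i \<notin> K"
    proof
      assume "x + (1 / Suc n) *\<^sub>R i \<in> K"
      then have "(x + (1 / Suc n) *\<^sub>R i) - (1 / Suc n) *\<^sub>R i \<in> K1"
        unfolding K1_def by (intro image_eqI[where x="(x + (1 / Suc n) *\<^sub>R i, 1 / Suc n)"]) auto
      with False show False by simp
    qed
    moreover have "x \<notin> K"
    proof
      assume "x \<in> K"
      then have "x - 0 *\<^sub>R i \<in> K1"
        unfolding K1_def by (intro image_eqI[where x="(x, 0)"]) auto
      with False show False by simp
    qed
    ultimately show ?thesis using K(3) False by (simp add: D_def)
  next
    case True
    let ?t = "1 / real (Suc n)"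
    have "\<exists>z. 0 < z \<and> z < ?t \<and> \<theta> (x + ?t *\<^sub>R i) - \<theta> (x + 0 *\<^sub>R i) = (?t - 0) * Defs.pderiv \<theta> i (x + z *\<^sub>R i)"
      by (rule MVT2) (auto intro: dir_deriv[OF d])
    then obtain z where z: "\<theta> (x + ?t *\<^sub>R i) - \<theta> x = ?t * Defs.pderiv \<theta> i (x + z *\<^sub>R i)" by auto
    have "D n x = Defs.pderiv \<theta> i (x + z *\<^sub>R i)" unfolding D_def z by simp
    then show ?thesis using M True by simp
  qed
  have "(\<lambda>n. integral\<^sup>L lborel (D n)) \<longlonglongrightarrow> integral\<^sup>L lborel (Defs.pderiv \<theta> i)"
  proof (rule integral_dominated_convergence[where w="\<lambda>x. M * indicator K1 x"])
    show "Defs.pderiv \<theta> i \<in> borel_measurable lborel" using pc by (simp add: borel_measurable_continuous_onI)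
    show "D n \<in> borel_measurable lborel" for n
      unfolding D_def using \<theta>m by measurable
    show "integrable lborel (\<lambda>x. M * indicator K1 x)"
      using K1c by (intro integrable_mult_right integrable_real_indicator emeasure_compact_finite) (auto intro: borel_compact)
    show "AE x in lborel. (\<lambda>n. D n x) \<longlonglongrightarrow> Defs.pderiv \<theta> i x" using lim by simp
    show "AE x in lborel. norm (D n x) \<le> M * indicator K1 x" for n using bound by simp
  qed
  then show ?thesis using D0 LIMSEQ_unique[OF _ tendsto_const] by simp
qed


lemma CS_aux:
  fixes A B C :: real
  assumes "\<And>t. 0 \<le> A - 2 * t * C + t\<^sup>2 * B" "0 \<le> A" "0 \<le> B"
  shows "C \<le> sqrt A * sqrt B"
proof -
  have "C\<^sup>2 \<le> A * B"
  proof (cases "B = 0")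
    case True
    have "C = 0"
    proof (rule ccontr)
      assume "C \<noteq> 0"
      have "0 \<le> A - 2 * ((A + 1) / (2 * C)) * C" using assms(1)[of "(A + 1) / (2 * C)"] True by simp
      also have "\<dots> = -1" using \<open>C \<noteq> 0\<close> by (simp add: field_simps)
      finally show False by simp
    qed
    then show ?thesis using True by simp
  next
    case False
    then have Bp: "B > 0" using assms(3) by simp
    have "0 \<le> A - 2 * (C / B) * C + (C / B)\<^sup>2 * B" by (rule assms(1))
    also have "\<dots> = (A * B - C\<^sup>2) / B" using Bp by (simp add: field_simps power2_eq_square)
    finally show ?thesis using Bp by (simp add: divide_nonneg_pos zero_le_divide_iff)
  qed
  then have "sqrt (C\<^sup>2) \<le> sqrt (A * B)" by (rule real_sqrt_le_mono)
  then show ?thesis by (simp add: real_sqrt_mult)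
qed

lemma int_lin3:
  fixes a b c :: "'a \<Rightarrow> real"
  assumes "integrable M a" "integrable M b" "integrable M c"
  shows "integral\<^sup>L M (\<lambda>x. a x + s * b x + r * c x) = integral\<^sup>L M a + s * integral\<^sup>L M b + r * integral\<^sup>L M c"
proof -
  have i1: "integrable M (\<lambda>x. s * b x)" "integrable M (\<lambda>x. r * c x)" using assms by auto
  have i2: "integrable M (\<lambda>x. a x + s * b x)" using assms(1) i1(1) by (rule Bochner_Integration.integrable_add)
  have "integral\<^sup>L M (\<lambda>x. a x + s * b x + r * c x) = integral\<^sup>L M (\<lambda>x. a x + s * b x) + integral\<^sup>L M (\<lambda>x. r * c x)"
    using i2 i1(2) by (rule Bochner_Integration.integral_add)
  also have "integral\<^sup>L M (\<lambda>x. a x + s * b x) = integral\<^sup>L M a + integral\<^sup>L M (\<lambda>x. s * b x)"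
    using assms(1) i1(1) by (rule Bochner_Integration.integral_add)
  finally show ?thesis by simp
qed

lemma minkowski2:
  fixes f g :: "'a \<Rightarrow> real" and F G :: "'a \<Rightarrow> 'b::euclidean_space"
  assumes fm: "f \<in> borel_measurable M" and gm: "g \<in> borel_measurable M"
    and Fm: "F \<in> borel_measurable M" and Gm: "G \<in> borel_measurable M"
    and fi: "integrable M (\<lambda>x. (f x)\<^sup>2)" and gi: "integrable M (\<lambda>x. (g x)\<^sup>2)"
    and Fi: "integrable M (\<lambda>x. (norm (F x))\<^sup>2)" and Gi: "integrable M (\<lambda>x. (norm (G x))\<^sup>2)"
  shows "sqrt (integral\<^sup>L M (\<lambda>x. (f x + g x)\<^sup>2) + integral\<^sup>L M (\<lambda>x. (norm (F x + G x))\<^sup>2))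
     \<le> sqrt (integral\<^sup>L M (\<lambda>x. (f x)\<^sup>2) + integral\<^sup>L M (\<lambda>x. (norm (F x))\<^sup>2))
       + sqrt (integral\<^sup>L M (\<lambda>x. (g x)\<^sup>2) + integral\<^sup>L M (\<lambda>x. (norm (G x))\<^sup>2))"
proof -
  define A where "A = integral\<^sup>L M (\<lambda>x. (f x)\<^sup>2) + integral\<^sup>L M (\<lambda>x. (norm (F x))\<^sup>2)"
  define B where "B = integral\<^sup>L M (\<lambda>x. (g x)\<^sup>2) + integral\<^sup>L M (\<lambda>x. (norm (G x))\<^sup>2)"
  define C where "C = integral\<^sup>L M (\<lambda>x. f x * g x) + integral\<^sup>L M (\<lambda>x. F x \<bullet> G x)"
  have fgi: "integrable M (\<lambda>x. f x * g x)"
  proof (rule Bochner_Integration.integrable_bound[OF Bochner_Integration.integrable_add[OF fi gi]])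
    show "(\<lambda>x. f x * g x) \<in> borel_measurable M" using fm gm by measurable
    show "AE x in M. norm (f x * g x) \<le> norm ((f x)\<^sup>2 + (g x)\<^sup>2)"
    proof (rule AE_I2)
      fix x
      have "2 * \<bar>f x * g x\<bar> \<le> (f x)\<^sup>2 + (g x)\<^sup>2"
        using sum_squares_bound[of "\<bar>f x\<bar>" "\<bar>g x\<bar>"] by (simp add: abs_mult power2_abs)
      then show "norm (f x * g x) \<le> norm ((f x)\<^sup>2 + (g x)\<^sup>2)" by simp
    qed
  qed
  have FGi: "integrable M (\<lambda>x. F x \<bullet> G x)"
  proof (rule Bochner_Integration.integrable_bound[OF Bochner_Integration.integrable_add[OF Fi Gi]])
    show "(\<lambda>x. F x \<bullet> G x) \<in> borel_measurable M" using Fm Gm by measurable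
    show "AE x in M. norm (F x \<bullet> G x) \<le> norm ((norm (F x))\<^sup>2 + (norm (G x))\<^sup>2)"
    proof (rule AE_I2)
      fix x
      have "\<bar>F x \<bullet> G x\<bar> \<le> norm (F x) * norm (G x)" by (rule Cauchy_Schwarz_ineq2)
      also have "\<dots> \<le> (norm (F x))\<^sup>2 + (norm (G x))\<^sup>2"
        using sum_squares_bound[of "norm (F x)" "norm (G x)"]
          mult_nonneg_nonneg[OF norm_ge_zero[of "F x"] norm_ge_zero[of "G x"]] by linarith
      finally show "norm (F x \<bullet> G x) \<le> norm ((norm (F x))\<^sup>2 + (norm (G x))\<^sup>2)" by simp
    qed
  qed
  have expand: "integral\<^sup>L M (\<lambda>x. (f x + t * g x)\<^sup>2) + integral\<^sup>L M (\<lambda>x. (norm (F x + t *\<^sub>R G x))\<^sup>2)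
      = A + 2 * t * C + t\<^sup>2 * B" for t
  proof -
    have e1: "(\<lambda>x. (f x + t * g x)\<^sup>2) = (\<lambda>x. (f x)\<^sup>2 + (2 * t) * (f x * g x) + t\<^sup>2 * (g x)\<^sup>2)"
      by (auto simp: fun_eq_iff power2_eq_square algebra_simps)
    have e2: "(\<lambda>x. (norm (F x + t *\<^sub>R G x))\<^sup>2) = (\<lambda>x. (norm (F x))\<^sup>2 + (2 * t) * (F x \<bullet> G x) + t\<^sup>2 * (norm (G x))\<^sup>2)"
    proof
      fix x
      have "(norm (F x + t *\<^sub>R G x))\<^sup>2 = (F x + t *\<^sub>R G x) \<bullet> (F x + t *\<^sub>R G x)"
        by (rule power2_norm_eq_inner)
      also have "\<dots> = F x \<bullet> F x + (2 * t) * (F x \<bullet> G x) + t\<^sup>2 * (G x \<bullet> G x)"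
        by (simp add: inner_add_left inner_add_right inner_commute algebra_simps power2_eq_square)
      finally show "(norm (F x + t *\<^sub>R G x))\<^sup>2 = (norm (F x))\<^sup>2 + (2 * t) * (F x \<bullet> G x) + t\<^sup>2 * (norm (G x))\<^sup>2"
        by (simp add: power2_norm_eq_inner)
    qed
    show ?thesis unfolding e1 e2 A_def B_def C_def int_lin3[OF fi fgi gi] int_lin3[OF Fi FGi Gi]
      by (simp add: algebra_simps)
  qed
  have A0: "0 \<le> A" unfolding A_def by (intro add_nonneg_nonneg integral_nonneg_AE) auto
  have B0: "0 \<le> B" unfolding B_def by (intro add_nonneg_nonneg integral_nonneg_AE) auto
  have "0 \<le> A - 2 * t * C + t\<^sup>2 * B" for t
  proof -
    have "0 \<le> integral\<^sup>L M (\<lambda>x. (f x + (- t) * g x)\<^sup>2) + integral\<^sup>L M (\<lambda>x. (norm (F x + (- t) *\<^sub>R G x))\<^sup>2)"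
      by (intro add_nonneg_nonneg integral_nonneg_AE) auto
    also have "\<dots> = A - 2 * t * C + t\<^sup>2 * B" unfolding expand[of "- t"] by simp
    finally show ?thesis .
  qed
  then have CS: "C \<le> sqrt A * sqrt B" using CS_aux A0 B0 by blast
  have "integral\<^sup>L M (\<lambda>x. (f x + g x)\<^sup>2) + integral\<^sup>L M (\<lambda>x. (norm (F x + G x))\<^sup>2) = A + 2 * C + B"
    using expand[of 1] by simp
  also have "\<dots> \<le> (sqrt A + sqrt B)\<^sup>2"
    using CS A0 B0 by (simp add: power2_sum)
  finally have "sqrt (integral\<^sup>L M (\<lambda>x. (f x + g x)\<^sup>2) + integral\<^sup>L M (\<lambda>x. (norm (F x + G x))\<^sup>2)) \<le> sqrt ((sqrt A + sqrt B)\<^sup>2)"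
    by (rule real_sqrt_le_mono)
  also have "\<dots> = sqrt A + sqrt B" using A0 B0 by simp
  finally show ?thesis unfolding A_def B_def .
qed


lemma abs_le_sq: "\<bar>t::real\<bar> \<le> 1 + t\<^sup>2"
  using sum_squares_bound[of "\<bar>t\<bar>" 1] by (simp add: power2_abs)

locale dom =
  fixes \<Omega> :: "'a::euclidean_space set"
  assumes op: "open \<Omega>" and bd: "bounded \<Omega>"
begin

lemma \<Omega>s: "\<Omega> \<in> sets lebesgue"
  using op by (rule open_sets_lebesgue)

lemma \<Omega>s': "\<Omega> \<inter> space lebesgue \<in> sets lebesgue"
  using \<Omega>s by simp

lemma fin: "finite_measure (lebesgue_on \<Omega>)"
proof (rule finite_measureI)
  have "\<Omega> \<in> sets lborel" using op by simp
  have "emeasure (lebesgue_on \<Omega>) (space (lebesgue_on \<Omega>)) = emeasure lebesgue \<Omega>"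
    using \<Omega>s' by (simp add: emeasure_restrict_space)
  also have "\<dots> = emeasure lborel \<Omega>" using \<open>\<Omega> \<in> sets lborel\<close> by simp
  also have "\<dots> < \<infinity>" using bd by (rule emeasure_bounded_finite)
  finally show "emeasure (lebesgue_on \<Omega>) (space (lebesgue_on \<Omega>)) \<noteq> \<infinity>" by simp
qed

lemma int_const: "integrable (lebesgue_on \<Omega>) (\<lambda>x. c::real)"
  using finite_measure.integrable_const[OF fin] .

lemma int_bounded:
  fixes f :: "'a \<Rightarrow> real"
  assumes "f \<in> borel_measurable (lebesgue_on \<Omega>)" "\<And>x. \<bar>f x\<bar> \<le> M"
  shows "integrable (lebesgue_on \<Omega>) f"
proof (rule Bochner_Integration.integrable_bound[OF int_const[of M] assms(1)])
  show "AE x in lebesgue_on \<Omega>. norm (f x) \<le> norm M"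
    using assms(2) by (intro AE_I2) (force intro: order_trans[OF _ abs_ge_self])
qed

lemma int_mult_bounded:
  fixes f g :: "'a \<Rightarrow> real"
  assumes "integrable (lebesgue_on \<Omega>) f" "g \<in> borel_measurable (lebesgue_on \<Omega>)" "\<And>x. \<bar>g x\<bar> \<le> M"
  shows "integrable (lebesgue_on \<Omega>) (\<lambda>x. f x * g x)"
proof (rule Bochner_Integration.integrable_bound[of _ "\<lambda>x. M * f x"])
  show "integrable (lebesgue_on \<Omega>) (\<lambda>x. M * f x)" using assms(1) by simp
  show "(\<lambda>x. f x * g x) \<in> borel_measurable (lebesgue_on \<Omega>)"
    using borel_measurable_integrable[OF assms(1)] assms(2) by measurable
  show "AE x in lebesgue_on \<Omega>. norm (f x * g x) \<le> norm (M * f x)"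
  proof (rule AE_I2)
    fix x
    have "\<bar>f x\<bar> * \<bar>g x\<bar> \<le> \<bar>f x\<bar> * \<bar>M\<bar>"
      using assms(3)[of x] by (intro mult_left_mono) auto
    then show "norm (f x * g x) \<le> norm (M * f x)" by (simp add: abs_mult mult.commute)
  qed
qed

lemma L2_int: "L2 \<Omega> v \<Longrightarrow> integrable (lebesgue_on \<Omega>) v"
  unfolding L2_def
  by (rule Bochner_Integration.integrable_bound[of _ "\<lambda>x. 1 + (v x)\<^sup>2"])
     (auto intro!: Bochner_Integration.integrable_add int_const AE_I2 simp: abs_le_sq)

lemma L2v_comp:
  assumes "L2v \<Omega> G" "i \<in> Basis"
  shows "integrable (lebesgue_on \<Omega>) (\<lambda>x. G x \<bullet> i)"
proof (rule Bochner_Integration.integrable_bound[of _ "\<lambda>x. 1 + (norm (G x))\<^sup>2"])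
  show "integrable (lebesgue_on \<Omega>) (\<lambda>x. 1 + (norm (G x))\<^sup>2)"
    using assms(1) unfolding L2v_def by (intro Bochner_Integration.integrable_add int_const) auto
  show "(\<lambda>x. G x \<bullet> i) \<in> borel_measurable (lebesgue_on \<Omega>)"
    using assms(1) unfolding L2v_def by (intro borel_measurable_inner) auto
  show "AE x in lebesgue_on \<Omega>. norm (G x \<bullet> i) \<le> norm (1 + (norm (G x))\<^sup>2)"
  proof (rule AE_I2)
    fix x
    have "\<bar>G x \<bullet> i\<bar> \<le> norm (G x)" using assms(2) by (simp add: Basis_le_norm)
    also have "\<dots> \<le> 1 + (norm (G x))\<^sup>2" using abs_le_sq[of "norm (G x)"] by simp
    finally show "norm (G x \<bullet> i) \<le> norm (1 + (norm (G x))\<^sup>2)" by simp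
  qed
qed

lemma test_facts:
  assumes "test_fun \<Omega> \<phi>"
  shows "\<phi> \<in> borel_measurable (lebesgue_on \<Omega>)" "\<exists>M. \<forall>x. \<bar>\<phi> x\<bar> \<le> M"
    "\<And>i. i \<in> Basis \<Longrightarrow> Defs.pderiv \<phi> i \<in> borel_measurable (lebesgue_on \<Omega>)"
    "\<And>i. i \<in> Basis \<Longrightarrow> \<exists>M. \<forall>x. \<bar>Defs.pderiv \<phi> i x\<bar> \<le> M"
proof -
  obtain K where K: "compact K" "K \<subseteq> \<Omega>" "\<And>x. x \<notin> K \<Longrightarrow> \<phi> x = 0"
    and c: "continuous_on UNIV \<phi>" and d: "\<And>x. \<phi> differentiable (at x)"
    and pc: "\<And>i. i \<in> Basis \<Longrightarrow> continuous_on UNIV (Defs.pderiv \<phi> i)"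
    and pz: "\<And>i x. x \<notin> K \<Longrightarrow> Defs.pderiv \<phi> i x = 0"
    using test_fun_props[OF assms] by metis
  show "\<phi> \<in> borel_measurable (lebesgue_on \<Omega>)"
    using c by (intro continuous_imp_measurable_on_sets_lebesgue[OF _ \<Omega>s]) (auto intro: continuous_on_subset)
  show "\<exists>M. \<forall>x. \<bar>\<phi> x\<bar> \<le> M" using supp_bounded[OF c K(1) K(3)] by metis
  show "Defs.pderiv \<phi> i \<in> borel_measurable (lebesgue_on \<Omega>)" if "i \<in> Basis" for i
    using pc[OF that] by (intro continuous_imp_measurable_on_sets_lebesgue[OF _ \<Omega>s]) (auto intro: continuous_on_subset)
  show "\<exists>M. \<forall>x. \<bar>Defs.pderiv \<phi> i x\<bar> \<le> M" if "i \<in> Basis" for i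
    using supp_bounded[OF pc[OF that] K(1) pz] by metis
qed

lemma test_int_pderiv:
  assumes T: "test_fun \<Omega> \<theta>" and i: "i \<in> Basis"
  shows "integral\<^sup>L (lebesgue_on \<Omega>) (Defs.pderiv \<theta> i) = 0"
proof -
  obtain K where K: "compact K" "K \<subseteq> \<Omega>"
    and pc: "continuous_on UNIV (Defs.pderiv \<theta> i)"
    and pz: "\<And>x. x \<notin> K \<Longrightarrow> Defs.pderiv \<theta> i x = 0"
    using test_fun_props[OF T] i by metis
  have "integral\<^sup>L (lebesgue_on \<Omega>) (Defs.pderiv \<theta> i) = integral\<^sup>L lebesgue (\<lambda>x. indicator \<Omega> x *\<^sub>R Defs.pderiv \<theta> i x)"
    by (rule integral_restrict_space[OF \<Omega>s'])
  also have "\<dots> = integral\<^sup>L lebesgue (Defs.pderiv \<theta> i)"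
    using K(2) pz by (intro Bochner_Integration.integral_cong) (auto simp: indicator_def)
  also have "\<dots> = integral\<^sup>L lborel (Defs.pderiv \<theta> i)"
    using pc by (intro integral_completion) (simp add: borel_measurable_continuous_onI)
  also have "\<dots> = 0" by (rule integral_pderiv_zero[OF T i])
  finally show ?thesis .
qed

lemma wg_unique:
  assumes w1: "weak_grad \<Omega> v G1" and w2: "weak_grad \<Omega> v G2" and l1: "L2v \<Omega> G1" and l2: "L2v \<Omega> G2"
  shows "AE x in lebesgue_on \<Omega>. G1 x = G2 x"
proof -
  have comp: "AE x in lebesgue_on \<Omega>. G1 x \<bullet> i - G2 x \<bullet> i = 0" if i: "i \<in> Basis" for i
  proof (rule FL[OF op])
    have i1: "integrable (lebesgue_on \<Omega>) (\<lambda>x. G1 x \<bullet> i)" by (rule L2v_comp[OF l1 i])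
    have i2: "integrable (lebesgue_on \<Omega>) (\<lambda>x. G2 x \<bullet> i)" by (rule L2v_comp[OF l2 i])
    show "integrable (lebesgue_on \<Omega>) (\<lambda>x. G1 x \<bullet> i - G2 x \<bullet> i)" using i1 i2 by simp
    fix \<phi> assume T: "test_fun \<Omega> \<phi>"
    obtain M where M: "\<And>x. \<bar>\<phi> x\<bar> \<le> M" using test_facts(2)[OF T] by blast
    have pm: "\<phi> \<in> borel_measurable (lebesgue_on \<Omega>)" by (rule test_facts(1)[OF T])
    have j1: "integrable (lebesgue_on \<Omega>) (\<lambda>x. G1 x \<bullet> i * \<phi> x)" by (rule int_mult_bounded[OF i1 pm M])
    have j2: "integrable (lebesgue_on \<Omega>) (\<lambda>x. G2 x \<bullet> i * \<phi> x)" by (rule int_mult_bounded[OF i2 pm M])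
    have e1: "integral\<^sup>L (lebesgue_on \<Omega>) (\<lambda>x. v x * Defs.pderiv \<phi> i x) = - integral\<^sup>L (lebesgue_on \<Omega>) (\<lambda>x. G1 x \<bullet> i * \<phi> x)"
      using w1 T i unfolding weak_grad_def by blast
    have e2: "integral\<^sup>L (lebesgue_on \<Omega>) (\<lambda>x. v x * Defs.pderiv \<phi> i x) = - integral\<^sup>L (lebesgue_on \<Omega>) (\<lambda>x. G2 x \<bullet> i * \<phi> x)"
      using w2 T i unfolding weak_grad_def by blast
    have "integral\<^sup>L (lebesgue_on \<Omega>) (\<lambda>x. (G1 x \<bullet> i - G2 x \<bullet> i) * \<phi> x)
        = integral\<^sup>L (lebesgue_on \<Omega>) (\<lambda>x. G1 x \<bullet> i * \<phi> x - G2 x \<bullet> i * \<phi> x)"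
      by (simp add: left_diff_distrib)
    also have "\<dots> = integral\<^sup>L (lebesgue_on \<Omega>) (\<lambda>x. G1 x \<bullet> i * \<phi> x) - integral\<^sup>L (lebesgue_on \<Omega>) (\<lambda>x. G2 x \<bullet> i * \<phi> x)"
      using j1 j2 by (rule Bochner_Integration.integral_diff)
    also have "\<dots> = 0" using e1 e2 by simp
    finally show "integral\<^sup>L (lebesgue_on \<Omega>) (\<lambda>x. (G1 x \<bullet> i - G2 x \<bullet> i) * \<phi> x) = 0" .
  qed
  have "AE x in lebesgue_on \<Omega>. \<forall>i\<in>Basis. G1 x \<bullet> i - G2 x \<bullet> i = 0"
    by (rule AE_finite_allI[OF finite_Basis comp])
  then show ?thesis
    by (rule AE_mp[OF _ AE_I2]) (auto intro: euclidean_eqI)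
qed

lemma wgrad_spec:
  assumes "v \<in> H1 \<Omega>"
  shows "L2v \<Omega> (wgrad \<Omega> v)" "weak_grad \<Omega> v (wgrad \<Omega> v)"
proof -
  have "\<exists>G. L2v \<Omega> G \<and> weak_grad \<Omega> v G" using assms unfolding H1_def by blast
  then have "L2v \<Omega> (wgrad \<Omega> v) \<and> weak_grad \<Omega> v (wgrad \<Omega> v)"
    unfolding wgrad_def by (rule someI_ex)
  then show "L2v \<Omega> (wgrad \<Omega> v)" "weak_grad \<Omega> v (wgrad \<Omega> v)" by blast+
qed

lemma norms_eq:
  assumes "v \<in> H1 \<Omega>" "L2v \<Omega> G" "weak_grad \<Omega> v G"
  shows "grad_norm \<Omega> v = sqrt (integral\<^sup>L (lebesgue_on \<Omega>) (\<lambda>x. (norm (G x))\<^sup>2))"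
    "H1_norm \<Omega> v = sqrt (integral\<^sup>L (lebesgue_on \<Omega>) (\<lambda>x. (v x)\<^sup>2) + integral\<^sup>L (lebesgue_on \<Omega>) (\<lambda>x. (norm (G x))\<^sup>2))"
proof -
  have ae: "AE x in lebesgue_on \<Omega>. wgrad \<Omega> v x = G x"
    using wg_unique[OF wgrad_spec(2)[OF assms(1)] assms(3) wgrad_spec(1)[OF assms(1)] assms(2)] .
  have m1: "wgrad \<Omega> v \<in> borel_measurable (lebesgue_on \<Omega>)" using wgrad_spec(1)[OF assms(1)] by (simp add: L2v_def)
  have m2: "G \<in> borel_measurable (lebesgue_on \<Omega>)" using assms(2) by (simp add: L2v_def)
  have "integral\<^sup>L (lebesgue_on \<Omega>) (\<lambda>x. (norm (wgrad \<Omega> v x))\<^sup>2) = integral\<^sup>L (lebesgue_on \<Omega>) (\<lambda>x. (norm (G x))\<^sup>2)"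
  proof (rule integral_cong_AE)
    show "(\<lambda>x. (norm (wgrad \<Omega> v x))\<^sup>2) \<in> borel_measurable (lebesgue_on \<Omega>)" using m1 by measurable
    show "(\<lambda>x. (norm (G x))\<^sup>2) \<in> borel_measurable (lebesgue_on \<Omega>)" using m2 by measurable
    show "AE x in lebesgue_on \<Omega>. (norm (wgrad \<Omega> v x))\<^sup>2 = (norm (G x))\<^sup>2"
      using ae by (rule AE_mp[OF _ AE_I2]) simp
  qed
  then show "grad_norm \<Omega> v = sqrt (integral\<^sup>L (lebesgue_on \<Omega>) (\<lambda>x. (norm (G x))\<^sup>2))"
    "H1_norm \<Omega> v = sqrt (integral\<^sup>L (lebesgue_on \<Omega>) (\<lambda>x. (v x)\<^sup>2) + integral\<^sup>L (lebesgue_on \<Omega>) (\<lambda>x. (norm (G x))\<^sup>2))"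
    unfolding grad_norm_def H1_norm_def by simp_all
qed

end


lemma sq_comb_le: "((a::real) * u + b * v)\<^sup>2 \<le> 2 * a\<^sup>2 * u\<^sup>2 + 2 * b\<^sup>2 * v\<^sup>2"
proof -
  have "0 \<le> (a * u - b * v)\<^sup>2" by simp
  then show ?thesis by (simp add: power2_eq_square algebra_simps)
qed

context dom
begin

lemma int_lin2:
  fixes p r :: "'a \<Rightarrow> real"
  assumes "integrable (lebesgue_on \<Omega>) p" "integrable (lebesgue_on \<Omega>) r"
  shows "integral\<^sup>L (lebesgue_on \<Omega>) (\<lambda>x. a * p x + b * r x) = a * integral\<^sup>L (lebesgue_on \<Omega>) p + b * integral\<^sup>L (lebesgue_on \<Omega>) r"
proof -
  have "integral\<^sup>L (lebesgue_on \<Omega>) (\<lambda>x. a * p x + b * r x) = integral\<^sup>L (lebesgue_on \<Omega>) (\<lambda>x. a * p x) + integral\<^sup>L (lebesgue_on \<Omega>) (\<lambda>x. b * r x)"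
    using assms by (intro Bochner_Integration.integral_add) auto
  then show ?thesis by simp
qed

lemma lin_H1:
  assumes u: "u \<in> H1 \<Omega>" "L2v \<Omega> Gu" "weak_grad \<Omega> u Gu"
    and v: "v \<in> H1 \<Omega>" "L2v \<Omega> Gv" "weak_grad \<Omega> v Gv"
  shows "L2 \<Omega> (\<lambda>x. a * u x + b * v x)" "L2v \<Omega> (\<lambda>x. a *\<^sub>R Gu x + b *\<^sub>R Gv x)"
    "weak_grad \<Omega> (\<lambda>x. a * u x + b * v x) (\<lambda>x. a *\<^sub>R Gu x + b *\<^sub>R Gv x)"
proof -
  have uL: "L2 \<Omega> u" and vL: "L2 \<Omega> v" using u(1) v(1) by (auto simp: H1_def)
  have um: "u \<in> borel_measurable (lebesgue_on \<Omega>)" and vm: "v \<in> borel_measurable (lebesgue_on \<Omega>)"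
    using uL vL by (auto simp: L2_def)
  have ui: "integrable (lebesgue_on \<Omega>) u" and vi: "integrable (lebesgue_on \<Omega>) v"
    using uL vL by (auto intro: L2_int)
  show "L2 \<Omega> (\<lambda>x. a * u x + b * v x)" unfolding L2_def
  proof
    show "(\<lambda>x. a * u x + b * v x) \<in> borel_measurable (lebesgue_on \<Omega>)" using um vm by measurable
    show "integrable (lebesgue_on \<Omega>) (\<lambda>x. (a * u x + b * v x)\<^sup>2)"
    proof (rule Bochner_Integration.integrable_bound[of _ "\<lambda>x. 2 * a\<^sup>2 * (u x)\<^sup>2 + 2 * b\<^sup>2 * (v x)\<^sup>2"])
      show "integrable (lebesgue_on \<Omega>) (\<lambda>x. 2 * a\<^sup>2 * (u x)\<^sup>2 + 2 * b\<^sup>2 * (v x)\<^sup>2)"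
        using uL vL unfolding L2_def by (intro Bochner_Integration.integrable_add integrable_mult_right) auto
      show "(\<lambda>x. (a * u x + b * v x)\<^sup>2) \<in> borel_measurable (lebesgue_on \<Omega>)" using um vm by measurable
      show "AE x in lebesgue_on \<Omega>. norm ((a * u x + b * v x)\<^sup>2) \<le> norm (2 * a\<^sup>2 * (u x)\<^sup>2 + 2 * b\<^sup>2 * (v x)\<^sup>2)"
        using sq_comb_le by (intro AE_I2) (smt (verit) real_norm_def zero_le_power2)
    qed
  qed
  have Gum: "Gu \<in> borel_measurable (lebesgue_on \<Omega>)" and Gvm: "Gv \<in> borel_measurable (lebesgue_on \<Omega>)"
    using u(2) v(2) by (auto simp: L2v_def)
  show "L2v \<Omega> (\<lambda>x. a *\<^sub>R Gu x + b *\<^sub>R Gv x)" unfolding L2v_def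
  proof
    show "(\<lambda>x. a *\<^sub>R Gu x + b *\<^sub>R Gv x) \<in> borel_measurable (lebesgue_on \<Omega>)" using Gum Gvm by measurable
    show "integrable (lebesgue_on \<Omega>) (\<lambda>x. (norm (a *\<^sub>R Gu x + b *\<^sub>R Gv x))\<^sup>2)"
    proof (rule Bochner_Integration.integrable_bound[of _ "\<lambda>x. 2 * a\<^sup>2 * (norm (Gu x))\<^sup>2 + 2 * b\<^sup>2 * (norm (Gv x))\<^sup>2"])
      show "integrable (lebesgue_on \<Omega>) (\<lambda>x. 2 * a\<^sup>2 * (norm (Gu x))\<^sup>2 + 2 * b\<^sup>2 * (norm (Gv x))\<^sup>2)"
        using u(2) v(2) unfolding L2v_def by (intro Bochner_Integration.integrable_add integrable_mult_right) auto
      show "(\<lambda>x. (norm (a *\<^sub>R Gu x + b *\<^sub>R Gv x))\<^sup>2) \<in> borel_measurable (lebesgue_on \<Omega>)" using Gum Gvm by measurable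
      show "AE x in lebesgue_on \<Omega>. norm ((norm (a *\<^sub>R Gu x + b *\<^sub>R Gv x))\<^sup>2) \<le> norm (2 * a\<^sup>2 * (norm (Gu x))\<^sup>2 + 2 * b\<^sup>2 * (norm (Gv x))\<^sup>2)"
      proof (rule AE_I2)
        fix x
        have n: "norm (a *\<^sub>R Gu x + b *\<^sub>R Gv x) \<le> \<bar>a\<bar> * norm (Gu x) + \<bar>b\<bar> * norm (Gv x)"
          using norm_triangle_ineq[of "a *\<^sub>R Gu x" "b *\<^sub>R Gv x"] by simp
        have "(norm (a *\<^sub>R Gu x + b *\<^sub>R Gv x))\<^sup>2 \<le> (\<bar>a\<bar> * norm (Gu x) + \<bar>b\<bar> * norm (Gv x))\<^sup>2"
          using n by (intro power_mono) auto
        also have "\<dots> \<le> 2 * \<bar>a\<bar>\<^sup>2 * (norm (Gu x))\<^sup>2 + 2 * \<bar>b\<bar>\<^sup>2 * (norm (Gv x))\<^sup>2"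
          by (rule sq_comb_le)
        finally show "norm ((norm (a *\<^sub>R Gu x + b *\<^sub>R Gv x))\<^sup>2) \<le> norm (2 * a\<^sup>2 * (norm (Gu x))\<^sup>2 + 2 * b\<^sup>2 * (norm (Gv x))\<^sup>2)"
          by simp
      qed
    qed
  qed
  show "weak_grad \<Omega> (\<lambda>x. a * u x + b * v x) (\<lambda>x. a *\<^sub>R Gu x + b *\<^sub>R Gv x)"
    unfolding weak_grad_def
  proof (intro allI impI ballI)
    fix \<phi> i assume T: "test_fun \<Omega> \<phi>" and i: "(i::'a) \<in> Basis"
    obtain M where M: "\<And>x. \<bar>\<phi> x\<bar> \<le> M" using test_facts(2)[OF T] by blast
    obtain M' where M': "\<And>x. \<bar>Defs.pderiv \<phi> i x\<bar> \<le> M'" using test_facts(4)[OF T i] by blast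
    have pm: "\<phi> \<in> borel_measurable (lebesgue_on \<Omega>)" by (rule test_facts(1)[OF T])
    have dm: "Defs.pderiv \<phi> i \<in> borel_measurable (lebesgue_on \<Omega>)" by (rule test_facts(3)[OF T i])
    have i1: "integrable (lebesgue_on \<Omega>) (\<lambda>x. u x * Defs.pderiv \<phi> i x)" by (rule int_mult_bounded[OF ui dm M'])
    have i2: "integrable (lebesgue_on \<Omega>) (\<lambda>x. v x * Defs.pderiv \<phi> i x)" by (rule int_mult_bounded[OF vi dm M'])
    have i3: "integrable (lebesgue_on \<Omega>) (\<lambda>x. Gu x \<bullet> i * \<phi> x)" by (rule int_mult_bounded[OF L2v_comp[OF u(2) i] pm M])
    have i4: "integrable (lebesgue_on \<Omega>) (\<lambda>x. Gv x \<bullet> i * \<phi> x)" by (rule int_mult_bounded[OF L2v_comp[OF v(2) i] pm M])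
    have eu: "integral\<^sup>L (lebesgue_on \<Omega>) (\<lambda>x. u x * Defs.pderiv \<phi> i x) = - integral\<^sup>L (lebesgue_on \<Omega>) (\<lambda>x. Gu x \<bullet> i * \<phi> x)"
      using u(3) T i unfolding weak_grad_def by blast
    have ev: "integral\<^sup>L (lebesgue_on \<Omega>) (\<lambda>x. v x * Defs.pderiv \<phi> i x) = - integral\<^sup>L (lebesgue_on \<Omega>) (\<lambda>x. Gv x \<bullet> i * \<phi> x)"
      using v(3) T i unfolding weak_grad_def by blast
    have "integral\<^sup>L (lebesgue_on \<Omega>) (\<lambda>x. (a * u x + b * v x) * Defs.pderiv \<phi> i x)
        = integral\<^sup>L (lebesgue_on \<Omega>) (\<lambda>x. a * (u x * Defs.pderiv \<phi> i x) + b * (v x * Defs.pderiv \<phi> i x))"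
      by (simp add: algebra_simps)
    also have "\<dots> = a * integral\<^sup>L (lebesgue_on \<Omega>) (\<lambda>x. u x * Defs.pderiv \<phi> i x) + b * integral\<^sup>L (lebesgue_on \<Omega>) (\<lambda>x. v x * Defs.pderiv \<phi> i x)"
      by (rule int_lin2[OF i1 i2])
    also have "\<dots> = - (a * integral\<^sup>L (lebesgue_on \<Omega>) (\<lambda>x. Gu x \<bullet> i * \<phi> x) + b * integral\<^sup>L (lebesgue_on \<Omega>) (\<lambda>x. Gv x \<bullet> i * \<phi> x))"
      using eu ev by simp
    also have "a * integral\<^sup>L (lebesgue_on \<Omega>) (\<lambda>x. Gu x \<bullet> i * \<phi> x) + b * integral\<^sup>L (lebesgue_on \<Omega>) (\<lambda>x. Gv x \<bullet> i * \<phi> x)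
        = integral\<^sup>L (lebesgue_on \<Omega>) (\<lambda>x. a * (Gu x \<bullet> i * \<phi> x) + b * (Gv x \<bullet> i * \<phi> x))"
      by (rule int_lin2[OF i3 i4, symmetric])
    also have "\<dots> = integral\<^sup>L (lebesgue_on \<Omega>) (\<lambda>x. (a *\<^sub>R Gu x + b *\<^sub>R Gv x) \<bullet> i * \<phi> x)"
      by (simp add: inner_add_left algebra_simps)
    finally show "integral\<^sup>L (lebesgue_on \<Omega>) (\<lambda>x. (a * u x + b * v x) * Defs.pderiv \<phi> i x) =
       - integral\<^sup>L (lebesgue_on \<Omega>) (\<lambda>x. (a *\<^sub>R Gu x + b *\<^sub>R Gv x) \<bullet> i * \<phi> x)" .
  qed
qed

lemma H1_lin:
  assumes "u \<in> H1 \<Omega>" "v \<in> H1 \<Omega>"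
  shows "(\<lambda>x. a * u x + b * v x) \<in> H1 \<Omega>"
  using lin_H1[OF assms(1) wgrad_spec[OF assms(1)] assms(2) wgrad_spec[OF assms(2)], of a b]
  unfolding H1_def by blast

lemma sqrt_scale: "sqrt (integral\<^sup>L (lebesgue_on \<Omega>) (\<lambda>x. (a * f x)\<^sup>2) + integral\<^sup>L (lebesgue_on \<Omega>) (\<lambda>x. (norm (a *\<^sub>R F x))\<^sup>2))
   = \<bar>a\<bar> * sqrt (integral\<^sup>L (lebesgue_on \<Omega>) (\<lambda>x. (f x)\<^sup>2) + integral\<^sup>L (lebesgue_on \<Omega>) (\<lambda>x. (norm (F x))\<^sup>2))"
proof -
  have "integral\<^sup>L (lebesgue_on \<Omega>) (\<lambda>x. (a * f x)\<^sup>2) + integral\<^sup>L (lebesgue_on \<Omega>) (\<lambda>x. (norm (a *\<^sub>R F x))\<^sup>2)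
     = a\<^sup>2 * (integral\<^sup>L (lebesgue_on \<Omega>) (\<lambda>x. (f x)\<^sup>2) + integral\<^sup>L (lebesgue_on \<Omega>) (\<lambda>x. (norm (F x))\<^sup>2))"
    by (simp add: power_mult_distrib algebra_simps)
  then show ?thesis by (simp add: real_sqrt_mult)
qed

lemma norm_lin:
  assumes u: "u \<in> H1 \<Omega>" and v: "v \<in> H1 \<Omega>"
  shows "H1_norm \<Omega> (\<lambda>x. a * u x + b * v x) \<le> \<bar>a\<bar> * H1_norm \<Omega> u + \<bar>b\<bar> * H1_norm \<Omega> v"
    "grad_norm \<Omega> (\<lambda>x. a * u x + b * v x) \<le> \<bar>a\<bar> * grad_norm \<Omega> u + \<bar>b\<bar> * grad_norm \<Omega> v"
proof -
  let ?Gu = "wgrad \<Omega> u" and ?Gv = "wgrad \<Omega> v"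
  note su = wgrad_spec[OF u] and sv = wgrad_spec[OF v]
  note L = lin_H1[OF u su v sv, of a b]
  have w: "(\<lambda>x. a * u x + b * v x) \<in> H1 \<Omega>" by (rule H1_lin[OF u v])
  have uL: "L2 \<Omega> u" and vL: "L2 \<Omega> v" using u v by (auto simp: H1_def)
  have um: "(\<lambda>x. a * u x) \<in> borel_measurable (lebesgue_on \<Omega>)" and vm: "(\<lambda>x. b * v x) \<in> borel_measurable (lebesgue_on \<Omega>)"
    using uL vL by (auto simp: L2_def)
  have ui: "integrable (lebesgue_on \<Omega>) (\<lambda>x. (a * u x)\<^sup>2)" and vi: "integrable (lebesgue_on \<Omega>) (\<lambda>x. (b * v x)\<^sup>2)"
    using uL vL by (auto simp: L2_def power_mult_distrib)
  have Gum: "(\<lambda>x. a *\<^sub>R ?Gu x) \<in> borel_measurable (lebesgue_on \<Omega>)" and Gvm: "(\<lambda>x. b *\<^sub>R ?Gv x) \<in> borel_measurable (lebesgue_on \<Omega>)"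
    using su(1) sv(1) by (auto simp: L2v_def)
  have Gui: "integrable (lebesgue_on \<Omega>) (\<lambda>x. (norm (a *\<^sub>R ?Gu x))\<^sup>2)" and Gvi: "integrable (lebesgue_on \<Omega>) (\<lambda>x. (norm (b *\<^sub>R ?Gv x))\<^sup>2)"
    using su(1) sv(1) by (auto simp: L2v_def power_mult_distrib)
  have z: "(\<lambda>x::'a. 0::real) \<in> borel_measurable (lebesgue_on \<Omega>)" "integrable (lebesgue_on \<Omega>) (\<lambda>x::'a. (0::real)\<^sup>2)" by auto
  have "H1_norm \<Omega> (\<lambda>x. a * u x + b * v x)
      = sqrt (integral\<^sup>L (lebesgue_on \<Omega>) (\<lambda>x. (a * u x + b * v x)\<^sup>2) + integral\<^sup>L (lebesgue_on \<Omega>) (\<lambda>x. (norm (a *\<^sub>R ?Gu x + b *\<^sub>R ?Gv x))\<^sup>2))"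
    by (rule norms_eq(2)[OF w L(2) L(3)])
  also have "\<dots> \<le> sqrt (integral\<^sup>L (lebesgue_on \<Omega>) (\<lambda>x. (a * u x)\<^sup>2) + integral\<^sup>L (lebesgue_on \<Omega>) (\<lambda>x. (norm (a *\<^sub>R ?Gu x))\<^sup>2))
       + sqrt (integral\<^sup>L (lebesgue_on \<Omega>) (\<lambda>x. (b * v x)\<^sup>2) + integral\<^sup>L (lebesgue_on \<Omega>) (\<lambda>x. (norm (b *\<^sub>R ?Gv x))\<^sup>2))"
    by (rule minkowski2[OF um vm Gum Gvm ui vi Gui Gvi])
  also have "\<dots> = \<bar>a\<bar> * H1_norm \<Omega> u + \<bar>b\<bar> * H1_norm \<Omega> v"
    unfolding sqrt_scale H1_norm_def by simp
  finally show "H1_norm \<Omega> (\<lambda>x. a * u x + b * v x) \<le> \<bar>a\<bar> * H1_norm \<Omega> u + \<bar>b\<bar> * H1_norm \<Omega> v" .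
  have "grad_norm \<Omega> (\<lambda>x. a * u x + b * v x)
      = sqrt (integral\<^sup>L (lebesgue_on \<Omega>) (\<lambda>x. (0 + 0)\<^sup>2) + integral\<^sup>L (lebesgue_on \<Omega>) (\<lambda>x. (norm (a *\<^sub>R ?Gu x + b *\<^sub>R ?Gv x))\<^sup>2))"
    using norms_eq(1)[OF w L(2) L(3)] by simp
  also have "\<dots> \<le> sqrt (integral\<^sup>L (lebesgue_on \<Omega>) (\<lambda>x. (0::real)\<^sup>2) + integral\<^sup>L (lebesgue_on \<Omega>) (\<lambda>x. (norm (a *\<^sub>R ?Gu x))\<^sup>2))
       + sqrt (integral\<^sup>L (lebesgue_on \<Omega>) (\<lambda>x. (0::real)\<^sup>2) + integral\<^sup>L (lebesgue_on \<Omega>) (\<lambda>x. (norm (b *\<^sub>R ?Gv x))\<^sup>2))"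
    by (rule minkowski2[OF z(1) z(1) Gum Gvm z(2) z(2) Gui Gvi])
  also have "\<dots> = \<bar>a\<bar> * grad_norm \<Omega> u + \<bar>b\<bar> * grad_norm \<Omega> v"
    unfolding grad_norm_def by (simp add: power_mult_distrib real_sqrt_mult)
  finally show "grad_norm \<Omega> (\<lambda>x. a * u x + b * v x) \<le> \<bar>a\<bar> * grad_norm \<Omega> u + \<bar>b\<bar> * grad_norm \<Omega> v" .
qed

end


lemma test_fun_mult:
  assumes "test_fun \<Omega> \<phi>" "test_fun \<Omega> \<psi>"
  shows "test_fun \<Omega> (\<lambda>x. \<phi> x * \<psi> x)"
proof -
  obtain K where K: "compact K" "K \<subseteq> \<Omega>" "\<And>x. x \<notin> K \<Longrightarrow> \<phi> x = 0" and s1: "smooth_fun \<phi>"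
    using assms(1) unfolding test_fun_def by blast
  have s2: "smooth_fun \<psi>" using assms(2) unfolding test_fun_def by blast
  have "smooth_fun (\<lambda>x. \<phi> x * \<psi> x)" using s1 s2 unfolding smooth_fun_def by (auto intro: Ck_mult)
  then show ?thesis unfolding test_fun_def using K by auto
qed

lemma test_fun_lin:
  assumes "test_fun \<Omega> \<phi>" "test_fun \<Omega> \<psi>"
  shows "test_fun \<Omega> (\<lambda>x. a * \<phi> x + b * \<psi> x)"
proof -
  obtain K where K: "compact K" "K \<subseteq> \<Omega>" "\<And>x. x \<notin> K \<Longrightarrow> \<phi> x = 0" and s1: "smooth_fun \<phi>"
    using assms(1) unfolding test_fun_def by blast
  obtain K' where K': "compact K'" "K' \<subseteq> \<Omega>" "\<And>x. x \<notin> K' \<Longrightarrow> \<psi> x = 0" and s2: "smooth_fun \<psi>"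
    using assms(2) unfolding test_fun_def by blast
  have "smooth_fun (\<lambda>x. a * \<phi> x + b * \<psi> x)" using s1 s2 unfolding smooth_fun_def
    by (auto intro!: Ck_add Ck_mult Ck_const)
  moreover have "compact (K \<union> K')" "K \<union> K' \<subseteq> \<Omega>" using K K' by auto
  moreover have "\<And>x. x \<notin> K \<union> K' \<Longrightarrow> a * \<phi> x + b * \<psi> x = 0" using K K' by auto
  ultimately show ?thesis unfolding test_fun_def by blast
qed

lemma test_fun_zero: "test_fun \<Omega> (\<lambda>x. 0)"
  unfolding test_fun_def smooth_fun_def by (auto intro!: exI[of _ "{}"] Ck_const)

context dom
begin

definition cgrad :: "('a \<Rightarrow> real) \<Rightarrow> 'a \<Rightarrow> 'a" where
  "cgrad \<phi> x = (\<Sum>i\<in>Basis. Defs.pderiv \<phi> i x *\<^sub>R i)"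

lemma test_H1:
  assumes T: "test_fun \<Omega> \<phi>"
  shows "\<phi> \<in> H1 \<Omega>" "L2v \<Omega> (cgrad \<phi>)" "weak_grad \<Omega> \<phi> (cgrad \<phi>)"
proof -
  obtain K where K: "compact K" "K \<subseteq> \<Omega>" "\<And>x. x \<notin> K \<Longrightarrow> \<phi> x = 0"
    and c: "continuous_on UNIV \<phi>" and d: "\<And>x. \<phi> differentiable (at x)"
    and pc: "\<And>i. i \<in> Basis \<Longrightarrow> continuous_on UNIV (Defs.pderiv \<phi> i)"
    and pz: "\<And>i x. x \<notin> K \<Longrightarrow> Defs.pderiv \<phi> i x = 0"
    using test_fun_props[OF T] by metis
  have pm: "\<phi> \<in> borel_measurable (lebesgue_on \<Omega>)" by (rule test_facts(1)[OF T])
  obtain M where M: "\<And>x. \<bar>\<phi> x\<bar> \<le> M" using test_facts(2)[OF T] by blast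
  have L: "L2 \<Omega> \<phi>" unfolding L2_def
  proof
    show "\<phi> \<in> borel_measurable (lebesgue_on \<Omega>)" by (rule pm)
    show "integrable (lebesgue_on \<Omega>) (\<lambda>x. (\<phi> x)\<^sup>2)"
    proof (rule int_bounded)
      show "(\<lambda>x. (\<phi> x)\<^sup>2) \<in> borel_measurable (lebesgue_on \<Omega>)" using pm by measurable
      show "\<bar>(\<phi> x)\<^sup>2\<bar> \<le> M\<^sup>2" for x
      proof -
        have "\<bar>\<phi> x\<bar>\<^sup>2 \<le> M\<^sup>2" by (rule power_mono[OF M[of x] abs_ge_zero])
        then show ?thesis by (simp add: power2_abs)
      qed
    qed
  qed
  have gc: "continuous_on UNIV (cgrad \<phi>)" unfolding cgrad_def[abs_def]
    using pc by (intro continuous_intros) auto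
  have gz: "cgrad \<phi> x = 0" if "x \<notin> K" for x unfolding cgrad_def using pz[OF that] by simp
  have nc: "continuous_on UNIV (\<lambda>x. (norm (cgrad \<phi> x))\<^sup>2)" using gc by (intro continuous_intros)
  have gz2: "\<And>x. x \<notin> K \<Longrightarrow> (norm (cgrad \<phi> x))\<^sup>2 = 0" using gz by simp
  obtain M2 where M2: "\<And>x. \<bar>(norm (cgrad \<phi> x))\<^sup>2\<bar> \<le> M2"
    using supp_bounded[OF nc K(1) gz2] by blast
  have gm: "cgrad \<phi> \<in> borel_measurable (lebesgue_on \<Omega>)"
    using gc by (intro continuous_imp_measurable_on_sets_lebesgue[OF _ \<Omega>s]) (auto intro: continuous_on_subset)
  show Lv: "L2v \<Omega> (cgrad \<phi>)" unfolding L2v_def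
  proof
    show "cgrad \<phi> \<in> borel_measurable (lebesgue_on \<Omega>)" by (rule gm)
    show "integrable (lebesgue_on \<Omega>) (\<lambda>x. (norm (cgrad \<phi> x))\<^sup>2)"
      by (rule int_bounded[OF _ M2]) (use gm in measurable)
  qed
  show W: "weak_grad \<Omega> \<phi> (cgrad \<phi>)" unfolding weak_grad_def
  proof (intro allI impI ballI)
    fix \<psi> i assume S: "test_fun \<Omega> \<psi>" and i: "(i::'a) \<in> Basis"
    have d2: "\<And>x. \<psi> differentiable (at x)" using test_fun_props[OF S] by metis
    have TT: "test_fun \<Omega> (\<lambda>x. \<phi> x * \<psi> x)" by (rule test_fun_mult[OF T S])
    have "integral\<^sup>L (lebesgue_on \<Omega>) (Defs.pderiv (\<lambda>x. \<phi> x * \<psi> x) i) = 0"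
      by (rule test_int_pderiv[OF TT i])
    then have z: "integral\<^sup>L (lebesgue_on \<Omega>) (\<lambda>x. \<phi> x * Defs.pderiv \<psi> i x + Defs.pderiv \<phi> i x * \<psi> x) = 0"
      by (simp add: pderiv_mult[OF d d2])
    obtain M3 where M3: "\<And>x. \<bar>Defs.pderiv \<psi> i x\<bar> \<le> M3" using test_facts(4)[OF S i] by blast
    obtain M4 where M4: "\<And>x. \<bar>\<psi> x\<bar> \<le> M4" using test_facts(2)[OF S] by blast
    have j1: "integrable (lebesgue_on \<Omega>) (\<lambda>x. \<phi> x * Defs.pderiv \<psi> i x)"
      by (rule int_mult_bounded[OF L2_int[OF L] test_facts(3)[OF S i] M3])
    have j2: "integrable (lebesgue_on \<Omega>) (\<lambda>x. Defs.pderiv \<phi> i x * \<psi> x)"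
    proof (rule int_mult_bounded[OF _ test_facts(1)[OF S] M4])
      obtain M5 where "\<And>x. \<bar>Defs.pderiv \<phi> i x\<bar> \<le> M5" using test_facts(4)[OF T i] by blast
      then show "integrable (lebesgue_on \<Omega>) (Defs.pderiv \<phi> i)" by (rule int_bounded[OF test_facts(3)[OF T i]])
    qed
    have ci: "cgrad \<phi> x \<bullet> i = Defs.pderiv \<phi> i x" for x
      unfolding cgrad_def using i by simp
    have "integral\<^sup>L (lebesgue_on \<Omega>) (\<lambda>x. \<phi> x * Defs.pderiv \<psi> i x) + integral\<^sup>L (lebesgue_on \<Omega>) (\<lambda>x. Defs.pderiv \<phi> i x * \<psi> x) = 0"
      using z Bochner_Integration.integral_add[OF j1 j2] by simp
    then show "integral\<^sup>L (lebesgue_on \<Omega>) (\<lambda>x. \<phi> x * Defs.pderiv \<psi> i x) = - integral\<^sup>L (lebesgue_on \<Omega>) (\<lambda>x. cgrad \<phi> x \<bullet> i * \<psi> x)"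
      unfolding ci by simp
  qed
  show "\<phi> \<in> H1 \<Omega>" unfolding H1_def using L Lv W by blast
qed

lemma const_H1: "(\<lambda>x. c) \<in> H1 \<Omega>" "L2v \<Omega> (\<lambda>x. 0)" "weak_grad \<Omega> (\<lambda>x. c) (\<lambda>x. 0)"
proof -
  show L0: "L2v \<Omega> (\<lambda>x. 0)" unfolding L2v_def by (auto)
  show W: "weak_grad \<Omega> (\<lambda>x. c) (\<lambda>x. 0)" unfolding weak_grad_def
  proof (intro allI impI ballI)
    fix \<phi> i assume T: "test_fun \<Omega> \<phi>" and i: "(i::'a) \<in> Basis"
    have "integral\<^sup>L (lebesgue_on \<Omega>) (\<lambda>x. c * Defs.pderiv \<phi> i x) = c * integral\<^sup>L (lebesgue_on \<Omega>) (Defs.pderiv \<phi> i)"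
      by simp
    also have "\<dots> = 0" using test_int_pderiv[OF T i] by simp
    finally show "integral\<^sup>L (lebesgue_on \<Omega>) (\<lambda>x. c * Defs.pderiv \<phi> i x) = - integral\<^sup>L (lebesgue_on \<Omega>) (\<lambda>x. 0 \<bullet> i * \<phi> x)"
      by simp
  qed
  have "L2 \<Omega> (\<lambda>x. c)" unfolding L2_def using int_const by auto
  then show "(\<lambda>x. c) \<in> H1 \<Omega>" unfolding H1_def using L0 W by blast
qed

lemma const_norms: "grad_norm \<Omega> (\<lambda>x. c) = 0" "H1_norm \<Omega> (\<lambda>x. c) = sqrt (integral\<^sup>L (lebesgue_on \<Omega>) (\<lambda>x. c\<^sup>2))"
  using norms_eq[OF const_H1] by simp_all

lemma norm_nonneg: "0 \<le> H1_norm \<Omega> v" "0 \<le> grad_norm \<Omega> v" "grad_norm \<Omega> v \<le> H1_norm \<Omega> v"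
proof -
  have a: "0 \<le> integral\<^sup>L (lebesgue_on \<Omega>) (\<lambda>x. (v x)\<^sup>2)" by (intro integral_nonneg_AE) auto
  have b: "0 \<le> integral\<^sup>L (lebesgue_on \<Omega>) (\<lambda>x. (norm (wgrad \<Omega> v x))\<^sup>2)" by (intro integral_nonneg_AE) auto
  show "0 \<le> H1_norm \<Omega> v" "0 \<le> grad_norm \<Omega> v" using a b by (auto simp: H1_norm_def grad_norm_def)
  show "grad_norm \<Omega> v \<le> H1_norm \<Omega> v" using a b unfolding H1_norm_def grad_norm_def by (intro real_sqrt_le_mono) simp
qed

lemma H10_H1: "v \<in> H10 \<Omega> \<Longrightarrow> v \<in> H1 \<Omega>"
  by (simp add: H10_def)

lemma zero_H10: "(\<lambda>x. 0) \<in> H10 \<Omega>"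
proof -
  have "H1_norm \<Omega> (\<lambda>x. 0) = 0" using const_norms(2)[of 0] by simp
  then show ?thesis unfolding H10_def using const_H1(1)[of 0] test_fun_zero[of \<Omega>]
    by (auto intro!: exI[of _ "\<lambda>x. 0"])
qed

lemma test_H10: "test_fun \<Omega> \<phi> \<Longrightarrow> \<phi> \<in> H10 \<Omega>"
proof -
  assume T: "test_fun \<Omega> \<phi>"
  have "H1_norm \<Omega> (\<lambda>x. \<phi> x - \<phi> x) = 0" using const_norms(2)[of 0] by simp
  then show ?thesis unfolding H10_def using test_H1(1)[OF T] T by (auto intro!: exI[of _ \<phi>])
qed

lemma H10_lin:
  assumes u: "u \<in> H10 \<Omega>" and v: "v \<in> H10 \<Omega>"
  shows "(\<lambda>x. a * u x + b * v x) \<in> H10 \<Omega>"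
proof -
  have uH: "u \<in> H1 \<Omega>" and vH: "v \<in> H1 \<Omega>" using u v by (auto simp: H10_def)
  have "\<exists>\<phi>. test_fun \<Omega> \<phi> \<and> H1_norm \<Omega> (\<lambda>x. (a * u x + b * v x) - \<phi> x) < e" if e: "e > 0" for e
  proof -
    define d where "d = e / (\<bar>a\<bar> + \<bar>b\<bar> + 1)"
    have d0: "d > 0" unfolding d_def using e by (simp add: add_nonneg_pos)
    obtain \<phi>1 where p1: "test_fun \<Omega> \<phi>1" "H1_norm \<Omega> (\<lambda>x. u x - \<phi>1 x) < d"
      using u d0 unfolding H10_def by blast
    obtain \<phi>2 where p2: "test_fun \<Omega> \<phi>2" "H1_norm \<Omega> (\<lambda>x. v x - \<phi>2 x) < d"
      using v d0 unfolding H10_def by blast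
    have h1: "(\<lambda>x. u x - \<phi>1 x) \<in> H1 \<Omega>"
      using H1_lin[OF uH test_H1(1)[OF p1(1)], of 1 "-1"] by simp
    have h2: "(\<lambda>x. v x - \<phi>2 x) \<in> H1 \<Omega>"
      using H1_lin[OF vH test_H1(1)[OF p2(1)], of 1 "-1"] by simp
    have eq: "(\<lambda>x. (a * u x + b * v x) - (a * \<phi>1 x + b * \<phi>2 x)) = (\<lambda>x. a * (u x - \<phi>1 x) + b * (v x - \<phi>2 x))"
      by (auto simp: algebra_simps)
    have "H1_norm \<Omega> (\<lambda>x. (a * u x + b * v x) - (a * \<phi>1 x + b * \<phi>2 x))
        \<le> \<bar>a\<bar> * H1_norm \<Omega> (\<lambda>x. u x - \<phi>1 x) + \<bar>b\<bar> * H1_norm \<Omega> (\<lambda>x. v x - \<phi>2 x)"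
      unfolding eq by (rule norm_lin(1)[OF h1 h2])
    also have "\<dots> \<le> \<bar>a\<bar> * d + \<bar>b\<bar> * d"
      using p1(2) p2(2) by (intro add_mono mult_left_mono) auto
    also have "\<dots> < e"
    proof -
      have "(\<bar>a\<bar> + \<bar>b\<bar>) * d < (\<bar>a\<bar> + \<bar>b\<bar> + 1) * d" using d0 by simp
      also have "\<dots> = e" unfolding d_def by (simp add: add_nonneg_pos)
      finally show ?thesis by (simp add: algebra_simps)
    qed
    finally show ?thesis using test_fun_lin[OF p1(1) p2(1), of a b] by blast
  qed
  then show ?thesis unfolding H10_def using H1_lin[OF uH vH] by simp
qed

end


context dom
begin

lemma int_pos:
  fixes f :: "'a \<Rightarrow> real"
  assumes fi: "integrable (lebesgue_on \<Omega>) f" and nn: "\<And>x. 0 \<le> f x"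
    and fc: "continuous_on \<Omega> f" and x0: "x0 \<in> \<Omega>" "f x0 > 0"
  shows "integral\<^sup>L (lebesgue_on \<Omega>) f > 0"
proof -
  have ge: "integral\<^sup>L (lebesgue_on \<Omega>) f \<ge> 0" using nn by (intro integral_nonneg_AE) auto
  have "integral\<^sup>L (lebesgue_on \<Omega>) f \<noteq> 0"
  proof
    assume "integral\<^sup>L (lebesgue_on \<Omega>) f = 0"
    then have "AE x in lebesgue_on \<Omega>. f x = 0"
      using integral_nonneg_eq_0_iff_AE[OF fi] nn by auto
    then have ae: "AE x in lebesgue. x \<in> \<Omega> \<longrightarrow> f x = 0"
      using AE_restrict_space_iff[OF \<Omega>s'] by simp
    define U where "U = f -` {0<..} \<inter> \<Omega>"
    have Uo: "open U" unfolding U_def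
      using continuous_on_open_vimage[OF op, THEN iffD1, OF fc, rule_format, OF open_greaterThan] .
    have Un: "U \<noteq> {}" using x0 unfolding U_def by auto
    have "AE x in lebesgue. x \<notin> U" using ae by (rule AE_mp[OF _ AE_I2]) (auto simp: U_def)
    moreover have "{x \<in> space lebesgue. \<not> x \<notin> U} = U" by simp
    moreover have "U \<in> sets lebesgue" using Uo by (rule open_sets_lebesgue)
    ultimately have "U \<in> null_sets lebesgue" using AE_iff_null[of lebesgue "\<lambda>x. x \<notin> U"] by simp
    then have "negligible U" by (simp add: negligible_iff_null_sets)
    with open_not_negligible[OF Uo Un] show False by simp
  qed
  with ge show ?thesis by simp
qed

lemma one_norm_pos:
  assumes "\<Omega> \<noteq> {}"
  shows "H1_norm \<Omega> (\<lambda>x. 1) > 0"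
proof -
  obtain x0 where "x0 \<in> \<Omega>" using assms by blast
  have "integral\<^sup>L (lebesgue_on \<Omega>) (\<lambda>x. (1::real)\<^sup>2) > 0"
    by (rule int_pos[OF _ _ _ \<open>x0 \<in> \<Omega>\<close>]) (auto intro: int_const)
  then show ?thesis using const_norms(2)[of 1] by simp
qed

lemma pos_test:
  assumes "\<Omega> \<noteq> {}"
  obtains \<theta> where "test_fun \<Omega> \<theta>" "H1_norm \<Omega> \<theta> > 0"
proof -
  obtain x0 where x0: "x0 \<in> \<Omega>" using assms by blast
  obtain a b where ab: "box a b \<subseteq> \<Omega>" "x0 \<in> box a b" using open_contains_box[OF op x0] by blast
  have "(\<lambda>n. gseq a b n x0) \<longlonglongrightarrow> 1" using gseq_lim[of a b x0] ab(2) by simp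
  then have "\<forall>\<^sub>F n in sequentially. gseq a b n x0 > 0"
    by (rule order_tendstoD) simp
  then obtain n where n: "gseq a b n x0 > 0" by (meson eventually_sequentially order_refl)
  let ?\<theta> = "gseq a b n"
  have T: "test_fun \<Omega> ?\<theta>" by (rule gseq_test[OF ab(1)])
  have L: "L2 \<Omega> ?\<theta>" using test_H1(1)[OF T] by (simp add: H1_def)
  have c: "continuous_on \<Omega> (\<lambda>x. (?\<theta> x)\<^sup>2)"
    using SM_cont[OF gseq_SM, of \<Omega> a b n] by (intro continuous_intros)
  have A: "integral\<^sup>L (lebesgue_on \<Omega>) (\<lambda>x. (?\<theta> x)\<^sup>2) > 0"
    by (rule int_pos[OF _ _ c x0]) (use L n in \<open>auto simp: L2_def\<close>)
  have B: "0 \<le> integral\<^sup>L (lebesgue_on \<Omega>) (\<lambda>x. (norm (wgrad \<Omega> ?\<theta> x))\<^sup>2)"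
    by (intro integral_nonneg_AE) auto
  have "H1_norm \<Omega> ?\<theta> > 0" unfolding H1_norm_def using add_pos_nonneg[OF A B] by simp
  then show ?thesis using that T by blast
qed

lemma trace_norm_props:
  assumes "u \<in> H1 \<Omega>"
  shows "0 \<le> trace_norm \<Omega> u" "trace_norm \<Omega> u \<le> H1_norm \<Omega> u"
    "\<And>c. (\<And>v. v \<in> H1 \<Omega> \<Longrightarrow> (\<lambda>x. v x - u x) \<in> H10 \<Omega> \<Longrightarrow> c \<le> H1_norm \<Omega> v) \<Longrightarrow> c \<le> trace_norm \<Omega> u"
proof -
  let ?S = "{H1_norm \<Omega> v | v. v \<in> H1 \<Omega> \<and> (\<lambda>x. v x - u x) \<in> H10 \<Omega>}"
  have uS: "H1_norm \<Omega> u \<in> ?S" using assms zero_H10 by auto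
  then have ne: "?S \<noteq> {}" by blast
  have bdd: "bdd_below ?S" by (rule bdd_belowI[of _ 0]) (auto simp: norm_nonneg)
  show "0 \<le> trace_norm \<Omega> u" unfolding trace_norm_def
    by (rule cInf_greatest[OF ne]) (auto simp: norm_nonneg)
  show "trace_norm \<Omega> u \<le> H1_norm \<Omega> u" unfolding trace_norm_def
    by (rule cInf_lower[OF uS bdd])
  show "c \<le> trace_norm \<Omega> u" if "\<And>v. v \<in> H1 \<Omega> \<Longrightarrow> (\<lambda>x. v x - u x) \<in> H10 \<Omega> \<Longrightarrow> c \<le> H1_norm \<Omega> v" for c
    unfolding trace_norm_def by (rule cInf_greatest[OF ne]) (use that in auto)
qed

end


theorem mainTheorem4:
  fixes \<Omega> :: "'a::euclidean_space set"
    and \<T> :: "real \<Rightarrow> 'a set set" and k :: "real \<Rightarrow> nat"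
    and P :: "real \<Rightarrow> ('a \<Rightarrow> real) \<Rightarrow> ('a \<Rightarrow> real)"
    and C_E C_P B :: real
  assumes dim: "DIM('a) = 2 \<or> DIM('a) = 3"
    and dom: "polyhedral_domain \<Omega>"
    and CE: "\<And>u w. u \<in> H1 \<Omega> \<Longrightarrow> w \<in> H1 \<Omega> \<Longrightarrow> (\<lambda>x. w x - u x) \<in> H10 \<Omega> \<Longrightarrow>
               (\<forall>v\<in>H1 \<Omega>. (\<lambda>x. v x - u x) \<in> H10 \<Omega> \<longrightarrow> grad_norm \<Omega> w \<le> grad_norm \<Omega> v) \<Longrightarrow>
               H1_norm \<Omega> w \<le> C_E * trace_norm \<Omega> u"
    and CP: "\<And>v. v \<in> H10 \<Omega> \<Longrightarrow> H1_norm \<Omega> v \<le> C_P * grad_norm \<Omega> v"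
    and mesh: "\<And>h. h > 0 \<Longrightarrow> simplicial_mesh (\<T> h) \<Omega> \<and> k h \<ge> 1"
    and conforming: "\<And>h. h > 0 \<Longrightarrow> lagrange_space \<Omega> (\<T> h) (k h) \<subseteq> H1 \<Omega>"
    and P_maps: "\<And>h v. h > 0 \<Longrightarrow> v \<in> H1 \<Omega> \<Longrightarrow> P h v \<in> lagrange_space \<Omega> (\<T> h) (k h)"
    and P_linear: "\<And>h u v a b. h > 0 \<Longrightarrow> u \<in> H1 \<Omega> \<Longrightarrow> v \<in> H1 \<Omega> \<Longrightarrow>
               P h (\<lambda>x. a * u x + b * v x) = (\<lambda>x. a * P h u x + b * P h v x)"
    and P_proj: "\<And>h v. h > 0 \<Longrightarrow> v \<in> lagrange_space \<Omega> (\<T> h) (k h) \<Longrightarrow> P h v = v"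
    and P_zero: "\<And>h. h > 0 \<Longrightarrow> P h ` H10 \<Omega> = lagrange_space0 \<Omega> (\<T> h) (k h)"
    and P_bound: "\<And>h v. h > 0 \<Longrightarrow> v \<in> H1 \<Omega> \<Longrightarrow> H1_norm \<Omega> (P h v) \<le> B * H1_norm \<Omega> v"
  shows "\<forall>h>0. \<forall>u \<in> lagrange_space \<Omega> (\<T> h) (k h). \<forall>w \<in> lagrange_space \<Omega> (\<T> h) (k h).
           (\<lambda>x. w x - u x) \<in> H10 \<Omega> \<and>
           (\<forall>v \<in> lagrange_space \<Omega> (\<T> h) (k h).
               (\<lambda>x. v x - u x) \<in> H10 \<Omega> \<longrightarrow> grad_norm \<Omega> w \<le> grad_norm \<Omega> v)
           \<longrightarrow> H1_norm \<Omega> w \<le> (1 + 2 * C_P) * B * C_E * trace_norm \<Omega> u"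
proof -
  have op: "open \<Omega>" and bd: "bounded \<Omega>" and ne: "\<Omega> \<noteq> {}"
    using dom unfolding polyhedral_domain_def by auto
  interpret D: dom \<Omega> using op bd by unfold_locales
  let ?one = "\<lambda>x::'a. (1::real)"
  have oneH: "?one \<in> H1 \<Omega>" by (rule D.const_H1(1))
  have onepos: "H1_norm \<Omega> ?one > 0" by (rule D.one_norm_pos[OF ne])
  have B0: "B \<ge> 0"
  proof -
    have "0 \<le> H1_norm \<Omega> (P 1 ?one)" by (rule D.norm_nonneg(1))
    also have "\<dots> \<le> B * H1_norm \<Omega> ?one" by (rule P_bound) (use oneH in auto)
    finally show ?thesis using onepos by (simp add: zero_le_mult_iff)
  qed
  have CE1: "C_E \<ge> 1"
  proof -
    have z: "(\<lambda>x. ?one x - ?one x) \<in> H10 \<Omega>" using D.zero_H10 by simp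
    have "H1_norm \<Omega> ?one \<le> C_E * trace_norm \<Omega> ?one"
    proof (rule CE[OF oneH oneH z])
      show "\<forall>v\<in>H1 \<Omega>. (\<lambda>x. v x - ?one x) \<in> H10 \<Omega> \<longrightarrow> grad_norm \<Omega> ?one \<le> grad_norm \<Omega> v"
        using D.const_norms(1)[of 1] D.norm_nonneg(2) by auto
    qed
    moreover have "0 \<le> trace_norm \<Omega> ?one" "trace_norm \<Omega> ?one \<le> H1_norm \<Omega> ?one"
      using D.trace_norm_props[OF oneH] by auto
    ultimately show ?thesis using onepos
    proof -
      assume a: "H1_norm \<Omega> ?one \<le> C_E * trace_norm \<Omega> ?one" "0 \<le> trace_norm \<Omega> ?one"
        "trace_norm \<Omega> ?one \<le> H1_norm \<Omega> ?one" "0 < H1_norm \<Omega> ?one"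
      show ?thesis
      proof (rule ccontr)
        assume "\<not> 1 \<le> C_E"
        then have "C_E * trace_norm \<Omega> ?one \<le> 1 * trace_norm \<Omega> ?one"
          using a(2) by (intro mult_right_mono) auto
        then have "H1_norm \<Omega> ?one \<le> trace_norm \<Omega> ?one" using a(1) by simp
        then have "trace_norm \<Omega> ?one > 0" using a(4) by simp
        then have "C_E * trace_norm \<Omega> ?one < 1 * trace_norm \<Omega> ?one"
          using \<open>\<not> 1 \<le> C_E\<close> by (intro mult_strict_right_mono) auto
        with a(1) a(3) show False by simp
      qed
    qed
  qed
  have CP0: "C_P \<ge> 0"
  proof -
    obtain \<theta> where T: "test_fun \<Omega> \<theta>" and tp: "H1_norm \<Omega> \<theta> > 0" using D.pos_test[OF ne] by blast
    have "H1_norm \<Omega> \<theta> \<le> C_P * grad_norm \<Omega> \<theta>" by (rule CP[OF D.test_H10[OF T]])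
    with tp have "0 < C_P * grad_norm \<Omega> \<theta>" by simp
    then show ?thesis using D.norm_nonneg(2)[of \<theta>] by (simp add: zero_less_mult_iff)
  qed
  show ?thesis
  proof (intro allI impI ballI)
    fix h :: real and u w
    assume h: "h > 0" and u: "u \<in> lagrange_space \<Omega> (\<T> h) (k h)" and w: "w \<in> lagrange_space \<Omega> (\<T> h) (k h)"
      and hyp: "(\<lambda>x. w x - u x) \<in> H10 \<Omega> \<and> (\<forall>v\<in>lagrange_space \<Omega> (\<T> h) (k h).
               (\<lambda>x. v x - u x) \<in> H10 \<Omega> \<longrightarrow> grad_norm \<Omega> w \<le> grad_norm \<Omega> v)"
    have uH: "u \<in> H1 \<Omega>" and wH: "w \<in> H1 \<Omega>" using conforming[OF h] u w by auto
    have wu: "(\<lambda>x. w x - u x) \<in> H10 \<Omega>" using hyp by blast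
    have wmin: "\<And>v. v \<in> lagrange_space \<Omega> (\<T> h) (k h) \<Longrightarrow> (\<lambda>x. v x - u x) \<in> H10 \<Omega> \<Longrightarrow> grad_norm \<Omega> w \<le> grad_norm \<Omega> v"
      using hyp by blast
    define K where "K = (1 + 2 * C_P) * B"
    have K0: "K \<ge> 0" unfolding K_def using CP0 B0 by simp
    have key: "H1_norm \<Omega> w \<le> K * H1_norm \<Omega> v" if vH: "v \<in> H1 \<Omega>" and vu: "(\<lambda>x. v x - u x) \<in> H10 \<Omega>" for v
    proof -
      have z: "(\<lambda>x. v x - w x) \<in> H10 \<Omega>"
        using D.H10_lin[OF vu wu, of 1 "-1"] by simp
      have Pz: "P h (\<lambda>x. v x - w x) \<in> lagrange_space0 \<Omega> (\<T> h) (k h)"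
        using P_zero[OF h] z by blast
      have Peq: "P h (\<lambda>x. v x - w x) = (\<lambda>x. P h v x - w x)"
      proof -
        have "P h (\<lambda>x. 1 * v x + (-1) * w x) = (\<lambda>x. 1 * P h v x + (-1) * P h w x)"
          by (rule P_linear[OF h vH wH])
        moreover have "P h w = w" by (rule P_proj[OF h w])
        ultimately show ?thesis by simp
      qed
      define pv where "pv = P h v"
      have pvL: "pv \<in> lagrange_space \<Omega> (\<T> h) (k h)" unfolding pv_def by (rule P_maps[OF h vH])
      have pvH: "pv \<in> H1 \<Omega>" using conforming[OF h] pvL by auto
      have d: "(\<lambda>x. pv x - w x) \<in> H10 \<Omega>" using Pz Peq unfolding pv_def lagrange_space0_def by simp
      have "(\<lambda>x. 1 * (pv x - w x) + 1 * (w x - u x)) \<in> H10 \<Omega>" by (rule D.H10_lin[OF d wu])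
      then have "(\<lambda>x. pv x - u x) \<in> H10 \<Omega>" by simp
      then have gmin: "grad_norm \<Omega> w \<le> grad_norm \<Omega> pv" by (rule wmin[OF pvL])
      have "(\<lambda>x. (-1) * (pv x - w x) + 0 * (pv x - w x)) \<in> H10 \<Omega>" by (rule D.H10_lin[OF d d])
      then have wp: "(\<lambda>x. w x - pv x) \<in> H10 \<Omega>" by simp
      have wpH: "(\<lambda>x. w x - pv x) \<in> H1 \<Omega>" using wp by (rule D.H10_H1)
      have "grad_norm \<Omega> (\<lambda>x. 1 * w x + (-1) * pv x) \<le> \<bar>1\<bar> * grad_norm \<Omega> w + \<bar>-1\<bar> * grad_norm \<Omega> pv"
        by (rule D.norm_lin(2)[OF wH pvH])
      then have g1: "grad_norm \<Omega> (\<lambda>x. w x - pv x) \<le> grad_norm \<Omega> w + grad_norm \<Omega> pv" by simp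
      have g2: "grad_norm \<Omega> (\<lambda>x. w x - pv x) \<le> 2 * H1_norm \<Omega> pv"
        using g1 gmin D.norm_nonneg(3)[of pv] by simp
      have c1: "H1_norm \<Omega> (\<lambda>x. w x - pv x) \<le> C_P * grad_norm \<Omega> (\<lambda>x. w x - pv x)"
        by (rule CP[OF wp])
      also have "\<dots> \<le> C_P * (2 * H1_norm \<Omega> pv)" using g2 CP0 by (intro mult_left_mono)
      finally have c2: "H1_norm \<Omega> (\<lambda>x. w x - pv x) \<le> 2 * C_P * H1_norm \<Omega> pv" by simp
      have "H1_norm \<Omega> (\<lambda>x. 1 * (w x - pv x) + 1 * pv x) \<le> \<bar>1\<bar> * H1_norm \<Omega> (\<lambda>x. w x - pv x) + \<bar>1\<bar> * H1_norm \<Omega> pv"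
        by (rule D.norm_lin(1)[OF wpH pvH])
      then have "H1_norm \<Omega> w \<le> H1_norm \<Omega> (\<lambda>x. w x - pv x) + H1_norm \<Omega> pv" by simp
      also have "\<dots> \<le> (1 + 2 * C_P) * H1_norm \<Omega> pv" using c2 by (simp add: algebra_simps)
      also have "\<dots> \<le> (1 + 2 * C_P) * (B * H1_norm \<Omega> v)"
        using P_bound[OF h vH] CP0 unfolding pv_def by (intro mult_left_mono) auto
      finally show ?thesis unfolding K_def by (simp add: algebra_simps)
    qed
    have tn0: "0 \<le> trace_norm \<Omega> u" by (rule D.trace_norm_props(1)[OF uH])
    have main: "H1_norm \<Omega> w \<le> K * trace_norm \<Omega> u"
    proof (cases "K = 0")
      case True
      then show ?thesis using key[OF uH] D.zero_H10 by simp
    next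
      case False
      then have Kp: "K > 0" using K0 by simp
      have "H1_norm \<Omega> w / K \<le> trace_norm \<Omega> u"
      proof (rule D.trace_norm_props(3)[OF uH])
        fix v assume "v \<in> H1 \<Omega>" "(\<lambda>x. v x - u x) \<in> H10 \<Omega>"
        from key[OF this] Kp show "H1_norm \<Omega> w / K \<le> H1_norm \<Omega> v"
          by (simp add: divide_le_eq mult.commute)
      qed
      then show ?thesis using Kp by (simp add: divide_le_eq mult.commute)
    qed
    also have "\<dots> \<le> K * (C_E * trace_norm \<Omega> u)"
      using CE1 tn0 K0 by (intro mult_left_mono) (auto simp: mult_le_cancel_right1)
    finally show "H1_norm \<Omega> w \<le> (1 + 2 * C_P) * B * C_E * trace_norm \<Omega> u"
      unfolding K_def by (simp add: mult.assoc)
  qed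
qed


end
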